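(* Let $1/q$ be a prime power, $\Bbbk=\mathbb{F}_{1/q}$, $\alpha=(\alpha_1,\dots,\alpha_k),\beta$ weak compositions of $n$, and $M\in\mathbb{N}^{k\times l}$ with row sums $\alpha$ and column sums $\beta$. Let $E\in\mathrm{Fl}_\alpha$ be the standard flag. Then the number of $F'\in\mathrm{Fl}_\beta$ such that $(E,F')$ has relative position $M$ is $$q^{-\sum_{1\le i'\le i\le k,\,1\le j<j'\le l}M_{i,j}M_{i',j'}}\frac{\prod_{i=1}^k[\alpha_i]_q!}{\prod_{i,j}[M_{i,j}]_q!}.$$
   Context: $\mathrm{Fl}_\alpha$ is the set of chains $0=F_0\subseteq\cdots\subseteq F_k=\Bbbk^n$ with $\dim F_i=\alpha_1+\cdots+\alpha_i$; $E_i=\langle e_1,\dots,e_{\alpha_1+\cdots+\alpha_i}\rangle$. For $F\in\mathrm{Fl}_\alpha$, $F'\in\mathrm{Fl}_\beta$, the relative position of $(F,F')$ is the unique $M\in\mathbb{N}^{k\times l}$ with $\dim(F_i\cap F'_j)=\sum_{i'\le i,j'\le j}M_{i',j'}$ for all $0\le i\le k$, $0\le j\le l$. $[m]_q!=\prod_{r=1}^m(1+q+\cdots+q^{r-1})$. Note the index set in the exponent allows $i'=i$. *)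

theory Defs
  imports Complex_Main "HOL-Library.Function_Algebras"
begin

text \<open>Vectors of \<open>k^n\<close> are functions \<open>nat \<Rightarrow> 'a\<close> vanishing at indices \<open>\<ge> n\<close>;
  coordinate \<open>j\<close> (0-based) corresponds to \<open>e_(j+1)\<close>.\<close>

definition fscale :: "'a::field \<Rightarrow> (nat \<Rightarrow> 'a) \<Rightarrow> (nat \<Rightarrow> 'a)" where
  "fscale c v = (\<lambda>i. c * v i)"

definition ambient :: "nat \<Rightarrow> (nat \<Rightarrow> 'a::field) set" where
  "ambient n = {v. \<forall>i\<ge>n. v i = 0}"

definition unitvec :: "nat \<Rightarrow> nat \<Rightarrow> 'a::field" where
  "unitvec j = (\<lambda>i. if i = j then 1 else 0)"

abbreviation fsubspace :: "(nat \<Rightarrow> 'a::field) set \<Rightarrow> bool" where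
  "fsubspace S \<equiv> module.subspace fscale S"

abbreviation fdim :: "(nat \<Rightarrow> 'a::field) set \<Rightarrow> nat" where
  "fdim S \<equiv> vector_space.dim fscale S"

definition Fl :: "nat \<Rightarrow> nat list \<Rightarrow> (nat \<Rightarrow> 'a::field) set list set" where
  "Fl n \<alpha> = {F. length F = Suc (length \<alpha>)
      \<and> (\<forall>i\<le>length \<alpha>. fsubspace (F ! i) \<and> F ! i \<subseteq> ambient n
             \<and> fdim (F ! i) = sum_list (take i \<alpha>))
      \<and> (\<forall>i<length \<alpha>. F ! i \<subseteq> F ! Suc i)}"

definition std_flag :: "nat list \<Rightarrow> (nat \<Rightarrow> 'a::field) set list" where
  "std_flag \<alpha> = map (\<lambda>i. module.span fscale (unitvec ` {..<sum_list (take i \<alpha>)}))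
                      [0..<Suc (length \<alpha>)]"

definition rel_pos :: "(nat \<Rightarrow> 'a::field) set list \<Rightarrow> (nat \<Rightarrow> 'a) set list
     \<Rightarrow> (nat \<Rightarrow> nat \<Rightarrow> nat) \<Rightarrow> bool" where
  "rel_pos F F' M \<longleftrightarrow> (\<forall>i<length F. \<forall>j<length F'.
      fdim (F ! i \<inter> F' ! j) = (\<Sum>i'\<in>{1..i}. \<Sum>j'\<in>{1..j}. M i' j'))"

definition qfact :: "real \<Rightarrow> nat \<Rightarrow> real" where
  "qfact q m = (\<Prod>r\<in>{1..m}. \<Sum>t<r. q ^ t)"

end

theory Submission
  imports Defs "HOL-Library.FuncSet"
begin

interpretation vs: vector_space "fscale :: 'a::field \<Rightarrow> (nat \<Rightarrow> 'a) \<Rightarrow> _"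
  by unfold_locales (auto simp: fscale_def fun_eq_iff algebra_simps)

lemma fscale_apply: "fscale c v i = c * v i" by (simp add: fscale_def)

lemma ambient_subspace: "fsubspace (ambient n :: (nat \<Rightarrow> 'a::field) set)"
  by (auto simp: vs.subspace_def ambient_def fscale_def)

lemma ambient_Int[simp]: "ambient a \<inter> ambient b = ambient (min a b)"
  by (auto simp: ambient_def min_def split: if_splits)

lemma ambient_mono: "a \<le> b \<Longrightarrow> ambient a \<subseteq> ambient b"
  by (auto simp: ambient_def)

lemma card_ambient: "card (ambient n :: (nat \<Rightarrow> 'a::{field,finite}) set) = card (UNIV::'a set) ^ n"
   and finite_ambient: "finite (ambient n :: (nat \<Rightarrow> 'a::{field,finite}) set)"
proof -
  have b: "bij_betw (\<lambda>v. restrict v {..<n}) (ambient n :: (nat \<Rightarrow> 'a) set) (PiE {..<n} (\<lambda>_. UNIV))"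
  proof (rule bij_betwI')
    fix x y :: "nat \<Rightarrow> 'a" assume "x \<in> ambient n" "y \<in> ambient n"
    then show "(restrict x {..<n} = restrict y {..<n}) = (x = y)"
      by (auto simp: ambient_def fun_eq_iff restrict_def) (metis not_le)
  next
    fix x :: "nat \<Rightarrow> 'a" assume "x \<in> ambient n" then show "restrict x {..<n} \<in> PiE {..<n} (\<lambda>_. UNIV)" by auto
  next
    fix y :: "nat \<Rightarrow> 'a" assume "y \<in> PiE {..<n} (\<lambda>_. UNIV)"
    then show "\<exists>x\<in>ambient n. y = restrict x {..<n}"
      by (intro bexI[of _ "\<lambda>i. if i < n then y i else 0"]) (auto simp: ambient_def PiE_def extensional_def restrict_def fun_eq_iff)
  qed
  have "finite (PiE {..<n} (\<lambda>_. UNIV :: 'a set))" by (simp add: finite_PiE)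
  then show "finite (ambient n :: (nat \<Rightarrow> 'a) set)" using b bij_betw_finite by blast
  show "card (ambient n :: (nat \<Rightarrow> 'a) set) = card (UNIV::'a set) ^ n"
    using bij_betw_same_card[OF b] by (simp add: card_PiE)
qed

lemma card_span_indep:
  fixes B :: "(nat \<Rightarrow> 'a::{field,finite}) set"
  assumes "finite B" "vs.independent B"
  shows "finite (vs.span B) \<and> card (vs.span B) = card (UNIV::'a set) ^ card B"
  using assms
proof (induction B rule: finite_induct)
  case empty then show ?case by (simp add: vs.span_empty)
next
  case (insert a B)
  have ind: "vs.independent B" and na: "a \<notin> vs.span B"
    using insert.prems insert.hyps by (auto simp: vs.independent_insert)
  from insert.IH[OF ind] have fB: "finite (vs.span B)" and cB: "card (vs.span B) = card (UNIV::'a set) ^ card B" by auto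
  define f where "f = (\<lambda>(c::'a, x). fscale c a + x)"
  have img: "vs.span (insert a B) = f ` ((UNIV::'a set) \<times> vs.span B)"
  proof -
    have "vs.span (insert a B) = {x. \<exists>k. (x - fscale k a) \<in> vs.span B}" by (rule vs.span_insert)
    also have "\<dots> = f ` ((UNIV::'a set) \<times> vs.span B)"
    proof (auto simp: f_def image_iff)
      fix x k assume "x - fscale k a \<in> vs.span B"
      then show "\<exists>xa. \<exists>y\<in>vs.span B. x = fscale xa a + y"
        by (intro exI[of _ k] bexI[of _ "x - fscale k a"]) auto
    next
      fix c b assume "b \<in> vs.span B"
      then show "\<exists>k. fscale c a + b - fscale k a \<in> vs.span B" by (intro exI[of _ c]) auto
    qed
    finally show ?thesis .
  qed
  have inj: "inj_on f ((UNIV::'a set) \<times> vs.span B)"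
  proof (rule inj_onI, clarsimp simp: f_def)
    fix c x d y assume x: "x \<in> vs.span B" and y: "y \<in> vs.span B" and e: "fscale c a + x = fscale d a + y"
    have "fscale (c - d) a = y - x" using e by (simp add: fun_eq_iff algebra_simps fscale_def)
    then have "fscale (c - d) a \<in> vs.span B" using x y vs.span_diff by auto
    then have "c = d"
    proof (rule contrapos_pp)
      assume "c \<noteq> d"
      then have "fscale (inverse (c - d)) (fscale (c - d) a) = a" by (simp add: fscale_def fun_eq_iff)
      then show "fscale (c - d) a \<notin> vs.span B" using na vs.span_scale by metis
    qed
    then show "c = d \<and> x = y" using e by simp
  qed
  have "finite ((UNIV::'a set) \<times> vs.span B)" using fB by (intro finite_cartesian_product) auto
  then show ?case using img inj insert.hyps cB
    by (simp add: card_image card_cartesian_product)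
qed

lemma card_subspace:
  fixes S :: "(nat \<Rightarrow> 'a::{field,finite}) set"
  assumes "fsubspace S" "finite S"
  shows "card S = card (UNIV::'a set) ^ fdim S"
proof -
  obtain B where B: "B \<subseteq> S" "vs.independent B" "S \<subseteq> vs.span B" "card B = fdim S"
    by (rule vs.basis_exists)
  have "vs.span B = S" using B assms vs.span_minimal[of B S] by auto
  moreover have "finite B" using B assms finite_subset by blast
  ultimately show ?thesis using card_span_indep[of B] B by auto
qed

lemma Q_ge2: "card (UNIV :: 'a::{field,finite} set) \<ge> 2"
proof -
  have "{0, 1::'a} \<subseteq> UNIV" by auto
  then have "card {0,1::'a} \<le> card (UNIV::'a set)" by (intro card_mono) auto
  then show ?thesis by simp
qed

lemma pow_inj: "card (UNIV :: 'a::{field,finite} set) ^ a = card (UNIV :: 'a set) ^ b \<longleftrightarrow> a = b"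
  using Q_ge2[where 'a='a] by (intro power_inject_exp) auto

lemma fdim_iff_card:
  fixes S :: "(nat \<Rightarrow> 'a::{field,finite}) set"
  assumes "fsubspace S" "finite S"
  shows "fdim S = d \<longleftrightarrow> card S = card (UNIV::'a set) ^ d"
  using card_subspace[OF assms] pow_inj[where 'a='a] by metis

lemma finite_sub_ambient: "S \<subseteq> ambient n \<Longrightarrow> finite (S :: (nat \<Rightarrow> 'a::{field,finite}) set)"
  using finite_ambient finite_subset by blast

lemma unitvec_ambient: "j < m \<Longrightarrow> unitvec j \<in> ambient m"
  by (auto simp: unitvec_def ambient_def)

lemma span_unitvec: "vs.span (unitvec ` {..<m}) = (ambient m :: (nat \<Rightarrow> 'a::field) set)"
proof
  show "vs.span (unitvec ` {..<m}) \<subseteq> (ambient m :: (nat \<Rightarrow> 'a::field) set)"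
    by (rule vs.span_minimal) (auto simp: unitvec_ambient ambient_subspace)
  show "(ambient m :: (nat \<Rightarrow> 'a::field) set) \<subseteq> vs.span (unitvec ` {..<m})"
  proof (induction m)
    case 0
    have "ambient 0 = {0 :: nat \<Rightarrow> 'a}" by (auto simp: ambient_def)
    then show ?case by (simp add: vs.span_zero)
  next
    case (Suc m)
    show ?case
    proof
      fix v :: "nat \<Rightarrow> 'a" assume v: "v \<in> ambient (Suc m)"
      have "v - fscale (v m) (unitvec m) \<in> ambient m"
        using v by (auto simp: ambient_def fscale_def unitvec_def)
      then have "v - fscale (v m) (unitvec m) \<in> vs.span (unitvec ` {..<Suc m})"
        using Suc.IH vs.span_mono[of "unitvec ` {..<m}" "unitvec ` {..<Suc m}"] by (auto simp: image_mono)
      moreover have "fscale (v m) (unitvec m) \<in> vs.span (unitvec ` {..<Suc m})"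
        by (intro vs.span_scale vs.span_base) auto
      ultimately have "(v - fscale (v m) (unitvec m)) + fscale (v m) (unitvec m) \<in> vs.span (unitvec ` {..<Suc m})"
        by (rule vs.span_add)
      then show "v \<in> vs.span (unitvec ` {..<Suc m})" by simp
    qed
  qed
qed

lemma std_flag_length[simp]: "length (std_flag \<alpha>) = Suc (length \<alpha>)"
  by (simp add: std_flag_def)

lemma std_flag_nth: "i \<le> length \<alpha> \<Longrightarrow> std_flag \<alpha> ! i = ambient (sum_list (take i \<alpha>))"
  by (simp add: std_flag_def span_unitvec nth_append del: upt_Suc)

abbreviation QQ :: "'a::{field,finite} itself \<Rightarrow> nat" where "QQ _ \<equiv> card (UNIV :: 'a set)"

definition DD :: "(nat \<Rightarrow> nat \<Rightarrow> nat) \<Rightarrow> nat \<Rightarrow> nat \<Rightarrow> nat" where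
  "DD M i j = (\<Sum>i'\<in>{1..i}. \<Sum>j'\<in>{1..j}. M i' j')"

lemma Fl_iff:
  "F \<in> (Fl n \<beta> :: (nat \<Rightarrow> 'a::{field,finite}) set list set) \<longleftrightarrow>
     length F = Suc (length \<beta>) \<and>
     (\<forall>i\<le>length \<beta>. fsubspace (F ! i) \<and> F ! i \<subseteq> ambient n
          \<and> card (F ! i) = card (UNIV::'a set) ^ sum_list (take i \<beta>))
     \<and> (\<forall>i<length \<beta>. F ! i \<subseteq> F ! Suc i)"
  unfolding Fl_def using fdim_iff_card finite_sub_ambient by (auto, blast+)

lemma relpos_iff:
  fixes F :: "(nat \<Rightarrow> 'a::{field,finite}) set list"
  assumes "F \<in> Fl n \<beta>"
  shows "rel_pos (std_flag \<alpha>) F M \<longleftrightarrow>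
    (\<forall>i\<le>length \<alpha>. \<forall>j\<le>length \<beta>.
        card (ambient (sum_list (take i \<alpha>)) \<inter> F ! j) = card (UNIV::'a set) ^ DD M i j)"
proof -
  have L: "length F = Suc (length \<beta>)" and sub: "\<And>j. j \<le> length \<beta> \<Longrightarrow> fsubspace (F ! j) \<and> F ! j \<subseteq> ambient n"
    using assms by (auto simp: Fl_iff)
  have "\<And>i j. i \<le> length \<alpha> \<Longrightarrow> j \<le> length \<beta> \<Longrightarrow>
     fdim (ambient (sum_list (take i \<alpha>)) \<inter> F ! j) = DD M i j \<longleftrightarrow>
     card (ambient (sum_list (take i \<alpha>)) \<inter> F ! j) = card (UNIV::'a set) ^ DD M i j"
    by (rule fdim_iff_card) (use sub ambient_subspace in \<open>auto intro: vs.subspace_inter finite_Int[OF disjI1[OF finite_ambient]]\<close>)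
  then show ?thesis unfolding rel_pos_def DD_def using L
    by (auto simp: std_flag_nth less_Suc_eq_le)
qed


lemma card_fibers:
  assumes "finite A" "f ` A \<subseteq> B" "finite B"
  shows "card A = (\<Sum>y\<in>B. card {x\<in>A. f x = y})"
proof -
  have "A = (\<Union>y\<in>B. {x\<in>A. f x = y})" using assms by auto
  then have "card A = card (\<Union>y\<in>B. {x\<in>A. f x = y})" by simp
  also have "\<dots> = (\<Sum>y\<in>B. card {x\<in>A. f x = y})"
    by (rule card_UN_disjoint) (use assms in auto)
  finally show ?thesis .
qed

lemma card_uniform:
  assumes "finite A" "\<And>y. y \<in> f ` A \<Longrightarrow> card {x\<in>A. f x = y} = c"
  shows "card A = card (f ` A) * c"
  using card_fibers[OF assms(1), of f "f ` A"] assms by simp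

lemma chain_mono:
  assumes "\<forall>i<l. F ! i \<subseteq> F ! Suc i" "i \<le> j" "j \<le> l"
  shows "F ! i \<subseteq> F ! j"
  using assms(2,3)
proof (induction j)
  case 0 then show ?case by simp
next
  case (Suc j)
  show ?case
  proof (cases "i = Suc j")
    case False
    then have "F ! i \<subseteq> F ! j" using Suc by auto
    also have "\<dots> \<subseteq> F ! Suc j" using assms(1) Suc.prems by auto
    finally show ?thesis .
  qed simp
qed

definition lext :: "(nat \<Rightarrow> 'a::field) set \<Rightarrow> (nat \<Rightarrow> 'a) \<Rightarrow> (nat \<Rightarrow> 'a) set" where
  "lext G v = (\<lambda>(c, g). g + fscale c v) ` (UNIV \<times> G)"

lemma lext_mem: "x \<in> lext G v \<longleftrightarrow> (\<exists>c. \<exists>g\<in>G. x = g + fscale c v)"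
  by (auto simp: lext_def)

lemma lext_inj:
  assumes "G \<subseteq> ambient n" "v n = 1"
  shows "inj_on (\<lambda>(c, g). g + fscale c v) (UNIV \<times> G)"
proof (rule inj_onI, clarsimp)
  fix c g d h assume g: "g \<in> G" and h: "h \<in> G" and e: "g + fscale c v = h + fscale d v"
  have "g n = 0" "h n = 0" using g h assms by (auto simp: ambient_def)
  then have "c = d" using fun_cong[OF e, of n] assms by (simp add: fscale_def)
  then show "c = d \<and> g = h" using e by simp
qed

lemma card_lext:
  fixes G :: "(nat \<Rightarrow> 'a::{field,finite}) set"
  assumes "G \<subseteq> ambient n" "v n = 1"
  shows "card (lext G v) = card (UNIV::'a set) * card G"
proof -
  have "finite G" using assms finite_sub_ambient by blast
  then show ?thesis unfolding lext_def using lext_inj[of G n v] assms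
    by (simp add: card_image card_cartesian_product)
qed

lemma lext_subspace:
  assumes "fsubspace G" shows "fsubspace (lext G v)"
  unfolding vs.subspace_def
proof (intro conjI ballI allI)
  show "0 \<in> lext G v" unfolding lext_mem
    by (intro exI[of _ 0] bexI[of _ 0]) (auto simp: fscale_def assms vs.subspace_0)
next
  fix x y assume "x \<in> lext G v" "y \<in> lext G v"
  then obtain c d g h where "g \<in> G" "h \<in> G" "x = g + fscale c v" "y = h + fscale d v" by (auto simp: lext_mem)
  then show "x + y \<in> lext G v" unfolding lext_mem
  proof -
    have "x + y = (g + h) + fscale (c + d) v" using \<open>x = _\<close> \<open>y = _\<close> by (simp add: fscale_def fun_eq_iff algebra_simps)
    moreover have "g + h \<in> G" by (rule vs.subspace_add[OF assms \<open>g \<in> G\<close> \<open>h \<in> G\<close>])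
    ultimately show "\<exists>c. \<exists>g\<in>G. x + y = g + fscale c v" by blast
  qed
next
  fix a x assume "x \<in> lext G v"
  then obtain c g where "g \<in> G" "x = g + fscale c v" by (auto simp: lext_mem)
  moreover have "fscale a g \<in> G" by (rule vs.subspace_scale[OF assms \<open>g \<in> G\<close>])
  moreover have "fscale a x = fscale a g + fscale (a * c) v" using \<open>x = _\<close> by (simp add: fscale_def fun_eq_iff algebra_simps)
  ultimately show "fscale a x \<in> lext G v" unfolding lext_mem by blast
qed

lemma lext_Int:
  assumes "G \<subseteq> ambient n" "v n = 1" "fsubspace G"
  shows "lext G v \<inter> ambient n = G"
proof
  show "G \<subseteq> lext G v \<inter> ambient n"
    using assms by (auto simp: lext_mem intro!: exI[of _ 0])
  show "lext G v \<inter> ambient n \<subseteq> G"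
  proof
    fix x assume "x \<in> lext G v \<inter> ambient n"
    then obtain c g where g: "g \<in> G" "x = g + fscale c v" by (auto simp: lext_mem)
    have "x n = 0" using \<open>x \<in> lext G v \<inter> ambient n\<close> by (auto simp: ambient_def)
    note g = g this
    have "g n = 0" using g assms by (auto simp: ambient_def)
    then have "c = 0" using g assms by (simp add: fscale_def)
    then show "x \<in> G" using g by (simp add: vs.scale_zero_left)
  qed
qed

lemma lext_mono: "G \<subseteq> G' \<Longrightarrow> lext G v \<subseteq> lext G' v"
  by (auto simp: lext_def)

lemma lext_sub: "fsubspace G \<Longrightarrow> G \<subseteq> lext G v"
  by (auto simp: lext_mem intro!: exI[of _ 0])

lemma lext_v: "fsubspace G \<Longrightarrow> v \<in> lext G v"
  by (auto simp: lext_mem intro!: exI[of _ 1] bexI[of _ 0] vs.subspace_0)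

lemma lext_ambient: "G \<subseteq> ambient (Suc n) \<Longrightarrow> v \<in> ambient (Suc n) \<Longrightarrow> lext G v \<subseteq> ambient (Suc n)"
proof
  fix x assume G: "G \<subseteq> ambient (Suc n)" and v: "v \<in> ambient (Suc n)" and "x \<in> lext G v"
  then obtain c g where "g \<in> G" "x = g + fscale c v" by (auto simp: lext_mem)
  then show "x \<in> ambient (Suc n)" using G v by (auto simp: ambient_def fscale_def)
qed

lemma hyper_decomp:
  fixes S :: "(nat \<Rightarrow> 'a::field) set"
  assumes "fsubspace S" "S \<subseteq> ambient (Suc n)" "v \<in> S" "v n = 1"
  shows "S = lext (S \<inter> ambient n) v"
proof
  show "lext (S \<inter> ambient n) v \<subseteq> S"
  proof
    fix x assume "x \<in> lext (S \<inter> ambient n) v"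
    then obtain c g where "g \<in> S" "x = g + fscale c v" by (auto simp: lext_mem)
    then show "x \<in> S" using assms by (auto intro: vs.subspace_add vs.subspace_scale)
  qed
  show "S \<subseteq> lext (S \<inter> ambient n) v"
  proof
    fix x assume x: "x \<in> S"
    have "x - fscale (x n) v \<in> S" using x assms by (intro vs.subspace_diff vs.subspace_scale) auto
    moreover have "x - fscale (x n) v \<in> ambient n"
    proof -
      have "x \<in> ambient (Suc n)" "v \<in> ambient (Suc n)" using x assms by auto
      then show ?thesis unfolding ambient_def fscale_def using assms(4)
      proof (clarsimp)
        fix i assume a: "\<forall>i\<ge>Suc n. x i = 0" "\<forall>i\<ge>Suc n. v i = 0" "n \<le> i"
        show "x i = x n * v i"
        proof (cases "i = n")
          case True then show ?thesis using assms(4) by simp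
        next
          case False then show ?thesis using a by simp
        qed
      qed
    qed
    ultimately show "x \<in> lext (S \<inter> ambient n) v"
      unfolding lext_mem by (intro exI[of _ "x n"] bexI[of _ "x - fscale (x n) v"]) auto
  qed
qed

lemma hyper_vec:
  fixes S :: "(nat \<Rightarrow> 'a::field) set"
  assumes "fsubspace S" "S \<subseteq> ambient (Suc n)" "\<not> S \<subseteq> ambient n"
  obtains v where "v \<in> S" "v n = 1"
proof -
  obtain u where u: "u \<in> S" "u \<notin> ambient n" using assms by auto
  have "u n \<noteq> 0"
  proof
    assume "u n = 0"
    moreover have "u \<in> ambient (Suc n)" using u assms by auto
    ultimately have "u \<in> ambient n" unfolding ambient_def
    proof (clarsimp)
      fix i assume a: "u n = 0" "\<forall>i\<ge>Suc n. u i = 0" "n \<le> i"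
      then show "u i = 0" by (cases "i = n") auto
    qed
    then show False using u by simp
  qed
  moreover have "fscale (inverse (u n)) u \<in> S" by (rule vs.subspace_scale[OF assms(1) u(1)])
  ultimately show ?thesis 
    by (intro that[of "fscale (inverse (u n)) u"]) (auto simp: fscale_def)
qed

lemma card_hyper:
  fixes S :: "(nat \<Rightarrow> 'a::{field,finite}) set"
  assumes "fsubspace S" "S \<subseteq> ambient (Suc n)" "\<not> S \<subseteq> ambient n"
  shows "card S = card (UNIV::'a set) * card (S \<inter> ambient n)"
proof -
  obtain v where v: "v \<in> S" "v n = 1" using hyper_vec[OF assms] by blast
  have "card S = card (lext (S \<inter> ambient n) v)" using hyper_decomp[OF assms(1,2) v] by simp
  also have "\<dots> = card (UNIV::'a set) * card (S \<inter> ambient n)" using v by (intro card_lext) auto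
  finally show ?thesis .
qed

definition ssum :: "(nat \<Rightarrow> 'a::field) set \<Rightarrow> (nat \<Rightarrow> 'a) set \<Rightarrow> (nat \<Rightarrow> 'a) set" where
  "ssum P R = (\<lambda>(p, r). p + r) ` (P \<times> R)"

lemma card_ssum:
  fixes P R :: "(nat \<Rightarrow> 'a::field) set"
  assumes "fsubspace P" "fsubspace R" "finite P" "finite R"
  shows "card (P \<times> R) = card (ssum P R) * card (P \<inter> R)"
  unfolding ssum_def
proof (rule card_uniform)
  show "finite (P \<times> R)" using assms by simp
  fix y assume "y \<in> (\<lambda>(p, r). p + r) ` (P \<times> R)"
  then obtain p0 r0 where pr: "p0 \<in> P" "r0 \<in> R" "y = p0 + r0" by auto
  have "{x \<in> P \<times> R. (\<lambda>(p, r). p + r) x = y} = (\<lambda>t. (p0 + t, r0 - t)) ` (P \<inter> R)"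
  proof (rule set_eqI, rule iffI)
    fix x assume "x \<in> {x \<in> P \<times> R. (\<lambda>(p, r). p + r) x = y}"
    then obtain p r where x: "x = (p, r)" "p \<in> P" "r \<in> R" "y = p + r" by auto
    have e: "p - p0 = r0 - r" using x pr by (simp add: algebra_simps)
    have "p - p0 \<in> P" using pr x assms by (auto intro: vs.subspace_diff)
    moreover have "r0 - r \<in> R" using pr x assms by (auto intro: vs.subspace_diff)
    ultimately have "p - p0 \<in> P \<inter> R" using e by simp
    moreover have "x = (p0 + (p - p0), r0 - (p - p0))" using x e by (simp add: algebra_simps)
    ultimately show "x \<in> (\<lambda>t. (p0 + t, r0 - t)) ` (P \<inter> R)" by blast
  next
    fix x assume "x \<in> (\<lambda>t. (p0 + t, r0 - t)) ` (P \<inter> R)"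
    then obtain t where t: "t \<in> P" "t \<in> R" "x = (p0 + t, r0 - t)" by auto
    have "p0 + t \<in> P" using pr t assms by (auto intro: vs.subspace_add)
    moreover have "r0 - t \<in> R" using pr t assms by (auto intro: vs.subspace_diff)
    ultimately show "x \<in> {x \<in> P \<times> R. (\<lambda>(p, r). p + r) x = y}" using t pr by auto
  qed
  moreover have "inj_on (\<lambda>t. (p0 + t, r0 - t)) (P \<inter> R)" by (auto intro: inj_onI)
  ultimately show "card {x \<in> P \<times> R. (\<lambda>(p, r). p + r) x = y} = card (P \<inter> R)"
    by (simp add: card_image)
qed


lemma sum_take_nth: "j \<le> length xs \<Longrightarrow> sum_list (take j xs) = (\<Sum>i\<in>{1..j}. xs ! (i - 1))"
proof (induction j)
  case 0 then show ?case by simp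
next
  case (Suc j)
  then have "take (Suc j) xs = take j xs @ [xs ! j]" by (simp add: take_Suc_conv_app_nth)
  then show ?case using Suc by (simp add: sum.atLeast1_atMost_eq)
qed

lemma sum_dec:
  fixes f :: "'b \<Rightarrow> nat"
  assumes "finite A" "f a \<ge> 1"
  shows "(\<Sum>x\<in>A. if x = a then f x - 1 else f x) + (if a \<in> A then 1 else 0) = sum f A"
proof (cases "a \<in> A")
  case True
  have "(\<Sum>x\<in>A. if x = a then f x - 1 else f x) = (f a - 1) + (\<Sum>x\<in>A - {a}. f x)"
    using True assms by (simp add: sum.remove)
  moreover have "sum f A = f a + (\<Sum>x\<in>A - {a}. f x)" using True assms by (simp add: sum.remove)
  ultimately show ?thesis using True assms by simp
next
  case False
  then show ?thesis by (auto intro: sum.cong)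
qed

lemma sum_take_dec:
  fixes xs :: "nat list"
  assumes "p < length xs" "xs ! p \<ge> 1" "i \<le> length xs"
  shows "sum_list (take i (xs[p := xs ! p - 1])) + (if p < i then 1 else 0) = sum_list (take i xs)"
proof -
  have "sum_list (take i (xs[p := xs ! p - 1])) = (\<Sum>x\<in>{1..i}. (xs[p := xs ! p - 1]) ! (x - 1))"
    using assms by (simp add: sum_take_nth)
  also have "\<dots> = (\<Sum>x\<in>{1..i}. if x = Suc p then xs ! (x - 1) - 1 else xs ! (x - 1))"
    using assms by (intro sum.cong) (auto simp: nth_list_update)
  finally have "sum_list (take i (xs[p := xs ! p - 1])) + (if p < i then 1 else 0) =
     (\<Sum>x\<in>{1..i}. if x = Suc p then xs ! (x - 1) - 1 else xs ! (x - 1)) + (if Suc p \<in> {1..i} then 1 else 0)"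
    by auto
  also have "\<dots> = (\<Sum>x\<in>{1..i}. xs ! (x - 1))"
    using sum_dec[of "{1..i}" "\<lambda>x. xs ! (x - 1)" "Suc p"] assms by simp
  also have "\<dots> = sum_list (take i xs)" using assms by (simp add: sum_take_nth)
  finally show ?thesis .
qed

lemma sum_list_dec:
  fixes xs :: "nat list"
  assumes "p < length xs" "xs ! p \<ge> 1"
  shows "sum_list (xs[p := xs ! p - 1]) + 1 = sum_list xs"
  using sum_take_dec[OF assms, of "length xs"] assms by simp

lemma DD_step:
  assumes "i \<ge> 1" "j \<ge> 1"
  shows "DD M i j + DD M (i - 1) (j - 1) = DD M i (j - 1) + DD M (i - 1) j + M i j"
proof -
  obtain a b where ab: "i = Suc a" "j = Suc b" using assms by (metis Suc_pred' less_eq_Suc_le One_nat_def)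
  have r: "\<And>c. DD M (Suc a) c = DD M a c + (\<Sum>j'\<in>{1..c}. M (Suc a) j')"
    by (simp add: DD_def)
  have c: "\<And>c. DD M c (Suc b) = DD M c b + (\<Sum>i'\<in>{1..c}. M i' (Suc b))"
    by (simp add: DD_def sum.distrib)
  show ?thesis using r[of "Suc b"] r[of b] unfolding ab by (simp add: c)
qed

lemma DD_dec:
  assumes "M a b \<ge> 1" "a \<ge> 1" "b \<ge> 1"
  shows "DD (\<lambda>i j. if i = a \<and> j = b then M i j - 1 else M i j) i j + (if a \<le> i \<and> b \<le> j then 1 else 0) = DD M i j"
proof -
  let ?M = "\<lambda>i j. if i = a \<and> j = b then M i j - 1 else M i j"
  have inner: "\<And>i'. (\<Sum>j'\<in>{1..j}. ?M i' j') + (if i' = a \<and> b \<le> j then 1 else 0) = (\<Sum>j'\<in>{1..j}. M i' j')"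
  proof -
    fix i'
    show "(\<Sum>j'\<in>{1..j}. ?M i' j') + (if i' = a \<and> b \<le> j then 1 else 0) = (\<Sum>j'\<in>{1..j}. M i' j')"
    proof (cases "i' = a")
      case True
      then show ?thesis using sum_dec[of "{1..j}" "M a" b] assms by (simp cong: if_cong)
    next
      case False then show ?thesis by simp
    qed
  qed
  have "DD ?M i j + (if a \<le> i \<and> b \<le> j then 1 else 0) =
     (\<Sum>i'\<in>{1..i}. (\<Sum>j'\<in>{1..j}. ?M i' j')) + (\<Sum>i'\<in>{1..i}. if i' = a \<and> b \<le> j then 1 else 0)"
  proof -
    have "(\<Sum>i'\<in>{1..i}. if i' = a \<and> b \<le> j then 1 else 0) = (if a \<le> i \<and> b \<le> j then (1::nat) else 0)"
      by (cases "b \<le> j") (use assms in \<open>auto simp: sum.delta\<close>)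
    then show ?thesis by (simp add: DD_def)
  qed
  also have "\<dots> = (\<Sum>i'\<in>{1..i}. (\<Sum>j'\<in>{1..j}. ?M i' j') + (if i' = a \<and> b \<le> j then 1 else 0))"
    by (simp add: sum.distrib)
  also have "\<dots> = DD M i j" unfolding DD_def using inner by simp
  finally show ?thesis .
qed

lemma DD_cols:
  assumes cols: "\<forall>j\<in>{1..length \<beta>}. (\<Sum>i\<in>{1..k}. M i j) = \<beta> ! (j - 1)"
    and zero: "\<forall>i\<in>{rr<..k}. \<forall>j\<in>{1..length \<beta>}. M i j = 0"
    and "rr \<le> i" "i \<le> k" "j \<le> length \<beta>"
  shows "DD M i j = sum_list (take j \<beta>)"
proof -
  have "DD M i j = (\<Sum>j'\<in>{1..j}. \<Sum>i'\<in>{1..i}. M i' j')" unfolding DD_def by (rule sum.swap)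
  also have "\<dots> = (\<Sum>j'\<in>{1..j}. \<Sum>i'\<in>{1..k}. M i' j')"
  proof (rule sum.cong[OF refl])
    fix j' assume j': "j' \<in> {1..j}"
    have "{1..k} = {1..i} \<union> {i<..k}" using assms by auto
    then have "(\<Sum>i'\<in>{1..k}. M i' j') = (\<Sum>i'\<in>{1..i} \<union> {i<..k}. M i' j')" by simp
    also have "\<dots> = (\<Sum>i'\<in>{1..i}. M i' j') + (\<Sum>i'\<in>{i<..k}. M i' j')"
      by (rule sum.union_disjoint) auto
    finally have "(\<Sum>i'\<in>{1..k}. M i' j') = (\<Sum>i'\<in>{1..i}. M i' j') + (\<Sum>i'\<in>{i<..k}. M i' j')" .
    moreover have "(\<Sum>i'\<in>{i<..k}. M i' j') = 0" using zero j' assms by auto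
    ultimately show "(\<Sum>i'\<in>{1..i}. M i' j') = (\<Sum>i'\<in>{1..k}. M i' j')" by simp
  qed
  also have "\<dots> = (\<Sum>j'\<in>{1..j}. \<beta> ! (j' - 1))" using cols assms by (intro sum.cong) auto
  also have "\<dots> = sum_list (take j \<beta>)" using assms by (simp add: sum_take_nth)
  finally show ?thesis .
qed


locale step =
  fixes n :: nat and \<alpha> \<beta> :: "nat list" and M :: "nat \<Rightarrow> nat \<Rightarrow> nat" and ty :: "'a::{field,finite} itself"
  assumes alpha: "sum_list \<alpha> = Suc n" and beta: "sum_list \<beta> = Suc n"
    and rows: "\<forall>i\<in>{1..length \<alpha>}. (\<Sum>j\<in>{1..length \<beta>}. M i j) = \<alpha> ! (i - 1)"
    and cols: "\<forall>j\<in>{1..length \<beta>}. (\<Sum>i\<in>{1..length \<alpha>}. M i j) = \<beta> ! (j - 1)"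
begin

abbreviation "k \<equiv> length \<alpha>"
abbreviation "l \<equiv> length \<beta>"
abbreviation "d i \<equiv> sum_list (take i \<alpha>)"

definition i0 where "i0 = (LEAST i. d i = Suc n)"
definition \<alpha>' where "\<alpha>' = \<alpha>[i0 - 1 := \<alpha> ! (i0 - 1) - 1]"
definition \<beta>' where "\<beta>' j0 = \<beta>[j0 - 1 := \<beta> ! (j0 - 1) - 1]"
definition M' where "M' j0 = (\<lambda>i j. if i = i0 \<and> j = j0 then M i j - 1 else M i j)"
definition J where "J = {j\<in>{1..l}. M i0 j \<ge> 1}"

lemma d_mono: "i \<le> j \<Longrightarrow> j \<le> k \<Longrightarrow> d i \<le> d j"
  by (simp add: sum_take_nth sum_mono2)

lemma d_Suc: "i < k \<Longrightarrow> d (Suc i) = d i + \<alpha> ! i"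
  by (simp add: take_Suc_conv_app_nth)

lemma dk: "d k = Suc n" using alpha by simp

lemma i0_props: "d i0 = Suc n" "i0 \<le> k" "1 \<le> i0"
proof -
  show "d i0 = Suc n" unfolding i0_def by (rule LeastI[of _ k]) (rule dk)
  show "i0 \<le> k" unfolding i0_def by (rule Least_le) (rule dk)
  show "1 \<le> i0"
  proof (rule ccontr)
    assume "\<not> 1 \<le> i0" then have "i0 = 0" by simp
    then show False using \<open>d i0 = Suc n\<close> by simp
  qed
qed

lemma d_less: "i < i0 \<Longrightarrow> d i \<le> n"
proof -
  assume a: "i < i0"
  then have "d i \<noteq> Suc n" unfolding i0_def by (rule not_less_Least)
  moreover have "d i \<le> Suc n" using d_mono[of i k] a i0_props dk by simp
  ultimately show ?thesis by simp
qed

lemma d_ge: "i0 \<le> i \<Longrightarrow> i \<le> k \<Longrightarrow> d i = Suc n"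
  using d_mono[of i0 i] d_mono[of i k] i0_props dk by simp

lemma alpha_i0: "\<alpha> ! (i0 - 1) \<ge> 1"
proof -
  have "d i0 = d (i0 - 1) + \<alpha> ! (i0 - 1)" using d_Suc[of "i0 - 1"] i0_props by simp
  moreover have "d (i0 - 1) \<le> n" using d_less[of "i0 - 1"] i0_props by simp
  ultimately show ?thesis using i0_props by simp
qed

lemma alpha_zero: "i0 < i \<Longrightarrow> i \<le> k \<Longrightarrow> \<alpha> ! (i - 1) = 0"
proof -
  assume a: "i0 < i" "i \<le> k"
  have "d i = d (i - 1) + \<alpha> ! (i - 1)" using d_Suc[of "i - 1"] a by simp
  moreover have "d i = Suc n" "d (i - 1) = Suc n" using d_ge a by auto
  ultimately show ?thesis by simp
qed

lemma zero_rows: "\<forall>i\<in>{i0<..k}. \<forall>j\<in>{1..l}. M i j = 0"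
proof (intro ballI)
  fix i j assume i: "i \<in> {i0<..k}" and j: "j \<in> {1..l}"
  have "(\<Sum>j\<in>{1..l}. M i j) = 0" using rows alpha_zero[of i] i i0_props by auto
  then show "M i j = 0" using j by simp
qed

lemma DD_beta: "i0 \<le> i \<Longrightarrow> i \<le> k \<Longrightarrow> j \<le> l \<Longrightarrow> DD M i j = sum_list (take j \<beta>)"
  by (rule DD_cols[OF _ zero_rows]) (use cols in auto)

lemma J_sub: "J \<subseteq> {1..l}" by (auto simp: J_def)

lemma beta_j0: "j0 \<in> J \<Longrightarrow> \<beta> ! (j0 - 1) \<ge> M i0 j0"
proof -
  assume j0: "j0 \<in> J"
  have "M i0 j0 \<le> (\<Sum>i\<in>{1..k}. M i j0)" using i0_props by (intro member_le_sum) auto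
  then show ?thesis using cols j0 by (auto simp: J_def)
qed

lemma alpha'_len[simp]: "length \<alpha>' = k" by (simp add: \<alpha>'_def)
lemma beta'_len[simp]: "length (\<beta>' j0) = l" by (simp add: \<beta>'_def)

lemma d'_eq: "i \<le> k \<Longrightarrow> sum_list (take i \<alpha>') = min (d i) n"
proof -
  assume i: "i \<le> k"
  have "sum_list (take i \<alpha>') + (if i0 - 1 < i then 1 else 0) = d i"
    unfolding \<alpha>'_def using i i0_props alpha_i0 by (intro sum_take_dec) auto
  moreover have "i0 - 1 < i \<longleftrightarrow> i0 \<le> i" using i0_props by auto
  ultimately show ?thesis using d_less[of i] d_ge[of i] i by (auto split: if_splits)
qed

lemma alpha'_sum: "sum_list \<alpha>' = n"
  using d'_eq[of k] dk by simp

lemma take_beta': "j0 \<in> J \<Longrightarrow> j \<le> l \<Longrightarrow> sum_list (take j (\<beta>' j0)) + (if j0 \<le> j then 1 else 0) = sum_list (take j \<beta>)"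
proof -
  assume j0: "j0 \<in> J" and j: "j \<le> l"
  have "sum_list (take j (\<beta>' j0)) + (if j0 - 1 < j then 1 else 0) = sum_list (take j \<beta>)"
    unfolding \<beta>'_def using j j0 J_sub beta_j0[OF j0] by (intro sum_take_dec) (auto simp: J_def)
  moreover have "j0 - 1 < j \<longleftrightarrow> j0 \<le> j" using j0 by (auto simp: J_def)
  ultimately show ?thesis by simp
qed

lemma beta'_sum: "j0 \<in> J \<Longrightarrow> sum_list (\<beta>' j0) = n"
  using take_beta'[of j0 l] beta J_sub by auto

lemma rows': "j0 \<in> J \<Longrightarrow> \<forall>i\<in>{1..k}. (\<Sum>j\<in>{1..l}. M' j0 i j) = \<alpha>' ! (i - 1)"
proof (intro ballI)
  fix i assume j0: "j0 \<in> J" and i: "i \<in> {1..k}"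
  show "(\<Sum>j\<in>{1..l}. M' j0 i j) = \<alpha>' ! (i - 1)"
  proof (cases "i = i0")
    case True
    have "(\<Sum>j\<in>{1..l}. if j = j0 then M i0 j - 1 else M i0 j) + (if j0 \<in> {1..l} then 1 else 0) = (\<Sum>j\<in>{1..l}. M i0 j)"
      using j0 by (intro sum_dec) (auto simp: J_def)
    then show ?thesis using True j0 rows i alpha_i0 i0_props
      by (auto simp: M'_def \<alpha>'_def J_def cong: if_cong)
  next
    case False
    then have "i - 1 \<noteq> i0 - 1" using i i0_props by auto
    then show ?thesis using False rows i by (simp add: M'_def \<alpha>'_def)
  qed
qed

lemma cols': "j0 \<in> J \<Longrightarrow> \<forall>j\<in>{1..l}. (\<Sum>i\<in>{1..k}. M' j0 i j) = \<beta>' j0 ! (j - 1)"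
proof (intro ballI)
  fix j assume j0: "j0 \<in> J" and j: "j \<in> {1..l}"
  show "(\<Sum>i\<in>{1..k}. M' j0 i j) = \<beta>' j0 ! (j - 1)"
  proof (cases "j = j0")
    case True
    have "(\<Sum>i\<in>{1..k}. if i = i0 then M i j0 - 1 else M i j0) + (if i0 \<in> {1..k} then 1 else 0) = (\<Sum>i\<in>{1..k}. M i j0)"
      using j0 by (intro sum_dec) (auto simp: J_def)
    then show ?thesis using True j0 cols j i0_props beta_j0[OF j0]
      by (auto simp: M'_def \<beta>'_def J_def cong: if_cong)
  next
    case False
    then have "j - 1 \<noteq> j0 - 1" using j j0 by (auto simp: J_def)
    then show ?thesis using False cols j by (simp add: M'_def \<beta>'_def)
  qed
qed

lemma DD_M': "j0 \<in> J \<Longrightarrow> DD (M' j0) i j + (if i0 \<le> i \<and> j0 \<le> j then 1 else 0) = DD M i j"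
  unfolding M'_def by (rule DD_dec) (use i0_props in \<open>auto simp: J_def\<close>)

lemma zero_rows': "\<forall>i\<in>{i0<..k}. \<forall>j\<in>{1..l}. M' j0 i j = 0"
  using zero_rows by (auto simp: M'_def)

lemma DD_beta': "j0 \<in> J \<Longrightarrow> i0 \<le> i \<Longrightarrow> i \<le> k \<Longrightarrow> j \<le> l \<Longrightarrow> DD (M' j0) i j = sum_list (take j (\<beta>' j0))"
proof -
  assume a: "j0 \<in> J" "i0 \<le> i" "i \<le> k" "j \<le> l"
  show ?thesis using DD_cols[where \<beta>="\<beta>' j0" and k=k and M="M' j0" and rr=i0 and i=i and j=j] cols'[OF a(1)] zero_rows'[of j0] a by simp
qed

end


context step
begin


definition H :: "(nat \<Rightarrow> 'a) set" where "H = ambient n"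
definition S :: "(nat \<Rightarrow> 'a) set list set" where
  "S = {F \<in> Fl (Suc n) \<beta>. rel_pos (std_flag \<alpha>) F M}"
definition S' :: "nat \<Rightarrow> (nat \<Rightarrow> 'a) set list set" where
  "S' j0 = {G \<in> Fl n (\<beta>' j0). rel_pos (std_flag \<alpha>') G (M' j0)}"
definition jump :: "(nat \<Rightarrow> 'a) set list \<Rightarrow> nat" where
  "jump F = (LEAST j. \<not> F ! j \<subseteq> H)"

lemma Q_pos: "(card (UNIV::'a set)) > 0" using Q_ge2[where 'a='a] by simp

lemma S_D:
  assumes "F \<in> S"
  shows "length F = Suc l"
    and "\<And>j. j \<le> l \<Longrightarrow> fsubspace (F ! j)"
    and "\<And>j. j \<le> l \<Longrightarrow> F ! j \<subseteq> ambient (Suc n)"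
    and "\<And>j. j \<le> l \<Longrightarrow> card (F ! j) = (card (UNIV::'a set)) ^ sum_list (take j \<beta>)"
    and "\<forall>j<l. F ! j \<subseteq> F ! Suc j"
    and "\<And>i j. i \<le> k \<Longrightarrow> j \<le> l \<Longrightarrow> card (ambient (d i) \<inter> F ! j) = (card (UNIV::'a set)) ^ DD M i j"
  using assms unfolding S_def by (auto simp: Fl_iff relpos_iff)

lemma H_sub: "H \<subseteq> ambient (Suc n)" unfolding H_def by (rule ambient_mono) simp

lemma unitvec_notH: "unitvec n \<notin> H" by (simp add: H_def ambient_def unitvec_def)

lemma Fl_last:
  assumes "F \<in> S" shows "F ! l = ambient (Suc n)"
proof -
  have "card (F ! l) = card (ambient (Suc n) :: (nat \<Rightarrow> 'a) set)"
    using S_D(4)[OF assms, of l] beta by (simp add: card_ambient)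
  then show ?thesis using S_D(3)[OF assms, of l] by (intro card_subset_eq) (auto simp: finite_ambient)
qed

lemma Fl_first:
  assumes "F \<in> S" shows "F ! 0 \<subseteq> H"
proof -
  have "card (F ! 0) = 1" using S_D(4)[OF assms, of 0] by simp
  moreover have "0 \<in> F ! 0" using S_D(2)[OF assms, of 0] by (simp add: vs.subspace_0)
  ultimately have "F ! 0 = {0}" by (metis card_1_singletonE singletonD)
  then show ?thesis by (simp add: H_def ambient_def)
qed

lemma jump_props:
  assumes "F \<in> S"
  shows "1 \<le> jump F" "jump F \<le> l" "\<not> F ! jump F \<subseteq> H"
    and "\<And>j. j < jump F \<Longrightarrow> F ! j \<subseteq> H"
    and "\<And>j. jump F \<le> j \<Longrightarrow> j \<le> l \<Longrightarrow> \<not> F ! j \<subseteq> H"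
proof -
  have ex: "\<not> F ! l \<subseteq> H" using Fl_last[OF assms] unitvec_notH unitvec_ambient[of n "Suc n"] by auto
  show 3: "\<not> F ! jump F \<subseteq> H" unfolding jump_def by (rule LeastI[of _ l]) (rule ex)
  show 2: "jump F \<le> l" unfolding jump_def by (rule Least_le) (rule ex)
  show 4: "\<And>j. j < jump F \<Longrightarrow> F ! j \<subseteq> H" unfolding jump_def using not_less_Least by blast
  show "1 \<le> jump F" using 3 Fl_first[OF assms] by (cases "jump F") auto
  show "\<And>j. jump F \<le> j \<Longrightarrow> j \<le> l \<Longrightarrow> \<not> F ! j \<subseteq> H"
    using chain_mono[OF S_D(5)[OF assms]] 3 by blast
qed

lemma fin_S_elem: "F \<in> S \<Longrightarrow> j \<le> l \<Longrightarrow> finite (F ! j)"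
  using S_D(3) finite_sub_ambient by blast

lemma H_subspace: "fsubspace H" unfolding H_def by (rule ambient_subspace)

lemma jump_J:
  assumes FS: "F \<in> S" shows "jump F \<in> J"
proof -
  define j0 where "j0 = jump F"
  note jp = jump_props[OF FS, folded j0_def]
  have "M i0 j0 \<noteq> 0"
  proof
    assume M0: "M i0 j0 = 0"
    define A where "A = (ambient (d (i0 - 1)) :: (nat \<Rightarrow> 'a) set)"
    define X where "X = F ! (j0 - 1)"
    define Y where "Y = F ! j0"
    have AH: "A \<subseteq> H" unfolding A_def H_def using d_less[of "i0 - 1"] i0_props by (intro ambient_mono) simp
    have XH: "X \<subseteq> H" unfolding X_def using jp by simp
    have XY: "X \<subseteq> Y" unfolding X_def Y_def using chain_mono[OF S_D(5)[OF FS], of "j0 - 1" j0] jp by simp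
    have YnH: "\<not> Y \<subseteq> H" unfolding Y_def using jp by simp
    have subY: "fsubspace Y" and subX: "fsubspace X" unfolding X_def Y_def using S_D(2)[OF FS] jp by auto
    have subA: "fsubspace A" unfolding A_def by (rule ambient_subspace)
    have finY: "finite Y" and finX: "finite X" unfolding X_def Y_def using fin_S_elem[OF FS] jp by auto
    have cY: "card Y = (card (UNIV::'a set)) ^ DD M i0 j0"
    proof -
      have "ambient (d i0) \<inter> Y = Y" unfolding Y_def using S_D(3)[OF FS, of j0] jp i0_props by auto
      then show ?thesis using S_D(6)[OF FS, of i0 j0] jp i0_props unfolding Y_def by simp
    qed
    have cX: "card X = (card (UNIV::'a set)) ^ DD M i0 (j0 - 1)"
    proof -
      have "j0 - 1 \<le> l" using jp by simp
      then have "ambient (d i0) \<inter> X = X" unfolding X_def using S_D(3)[OF FS, of "j0 - 1"] i0_props by auto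
      then show ?thesis using S_D(6)[OF FS, of i0 "j0 - 1"] jp i0_props unfolding X_def by simp
    qed
    have cAY: "card (A \<inter> Y) = (card (UNIV::'a set)) ^ DD M (i0 - 1) j0"
      unfolding A_def Y_def using S_D(6)[OF FS, of "i0 - 1" j0] jp i0_props by simp
    have cAX: "card (A \<inter> X) = (card (UNIV::'a set)) ^ DD M (i0 - 1) (j0 - 1)"
      unfolding A_def X_def using S_D(6)[OF FS, of "i0 - 1" "j0 - 1"] jp i0_props by simp
    have "DD M i0 j0 + DD M (i0 - 1) (j0 - 1) = DD M i0 (j0 - 1) + DD M (i0 - 1) j0"
      using DD_step[of i0 j0 M] i0_props jp M0 by simp
    then have eq: "card Y * card (A \<inter> X) = card X * card (A \<inter> Y)"
      using cY cX cAY cAX by (simp add: power_add[symmetric])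
    have AYX: "(A \<inter> Y) \<inter> X = A \<inter> X" using XY by auto
    have "card ((A \<inter> Y) \<times> X) = card (ssum (A \<inter> Y) X) * card (A \<inter> X)"
      using card_ssum[of "A \<inter> Y" X] subA subY subX finY finX AYX by (auto intro: vs.subspace_inter)
    then have "card (A \<inter> Y) * card X = card (ssum (A \<inter> Y) X) * card (A \<inter> X)"
      by (simp add: card_cartesian_product)
    moreover have "card (A \<inter> X) > 0"
      using finX subA subX by (auto intro!: card_gt_0_iff[THEN iffD2] vs.subspace_0)
    ultimately have c1: "card (ssum (A \<inter> Y) X) = card Y" using eq by (metis mult.commute mult_right_cancel not_gr0)
    have "ssum (A \<inter> Y) X \<subseteq> Y \<inter> H"
    proof
      fix x assume "x \<in> ssum (A \<inter> Y) X"
      then obtain p r where "p \<in> A \<inter> Y" "r \<in> X" "x = p + r" by (auto simp: ssum_def)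
      then show "x \<in> Y \<inter> H" using AH XH XY subY H_subspace by (auto intro: vs.subspace_add)
    qed
    moreover have "Y \<inter> H \<subset> Y" using YnH by auto
    ultimately have "ssum (A \<inter> Y) X \<subset> Y" by blast
    then have "card (ssum (A \<inter> Y) X) < card Y" using psubset_card_mono[OF finY] by blast
    then show False using c1 by simp
  qed
  then show ?thesis using jp unfolding J_def j0_def[symmetric] by auto
qed

lemma card_FH:
  assumes FS: "F \<in> S" and j: "j \<le> l"
  shows "card (F ! j \<inter> H) = (card (UNIV::'a set)) ^ sum_list (take j (\<beta>' (jump F)))"
proof -
  note jp = jump_props[OF FS]
  note tb = take_beta'[OF jump_J[OF FS] j]
  show ?thesis
  proof (cases "j < jump F")
    case True
    then have "F ! j \<inter> H = F ! j" using jp by auto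
    then show ?thesis using S_D(4)[OF FS j] tb True by simp
  next
    case False
    then have "card (F ! j) = (card (UNIV::'a set)) * card (F ! j \<inter> H)"
      unfolding H_def using S_D(2,3)[OF FS j] jp(5)[of j] j by (intro card_hyper) (auto simp: H_def)
    moreover have e: "sum_list (take j \<beta>) = Suc (sum_list (take j (\<beta>' (jump F))))" using tb False by simp
    moreover have "card (F ! j) = (card (UNIV::'a set)) * (card (UNIV::'a set)) ^ sum_list (take j (\<beta>' (jump F)))"
      using S_D(4)[OF FS j] unfolding e by simp
    ultimately show ?thesis using Q_pos by simp
  qed
qed

lemma S'_iff:
  "G \<in> S' j0 \<longleftrightarrow> length G = Suc l \<and>
     (\<forall>j\<le>l. fsubspace (G ! j) \<and> G ! j \<subseteq> ambient n \<and> card (G ! j) = (card (UNIV::'a set)) ^ sum_list (take j (\<beta>' j0)))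
     \<and> (\<forall>j<l. G ! j \<subseteq> G ! Suc j)
     \<and> (\<forall>i\<le>k. \<forall>j\<le>l. card (ambient (sum_list (take i \<alpha>')) \<inter> G ! j) = (card (UNIV::'a set)) ^ DD (M' j0) i j)"
proof -
  have "G \<in> S' j0 \<longleftrightarrow> G \<in> Fl n (\<beta>' j0) \<and> rel_pos (std_flag \<alpha>') G (M' j0)" by (simp add: S'_def)
  also have "\<dots> \<longleftrightarrow> G \<in> Fl n (\<beta>' j0) \<and> (\<forall>i\<le>k. \<forall>j\<le>l. card (ambient (sum_list (take i \<alpha>')) \<inter> G ! j) = (card (UNIV::'a set)) ^ DD (M' j0) i j)"
    using relpos_iff[of G n "\<beta>' j0" \<alpha>' "M' j0"] by auto
  finally show ?thesis by (simp add: Fl_iff)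
qed

lemma S_iff:
  "F \<in> S \<longleftrightarrow> length F = Suc l \<and>
     (\<forall>j\<le>l. fsubspace (F ! j) \<and> F ! j \<subseteq> ambient (Suc n) \<and> card (F ! j) = (card (UNIV::'a set)) ^ sum_list (take j \<beta>))
     \<and> (\<forall>j<l. F ! j \<subseteq> F ! Suc j)
     \<and> (\<forall>i\<le>k. \<forall>j\<le>l. card (ambient (d i) \<inter> F ! j) = (card (UNIV::'a set)) ^ DD M i j)"
proof -
  have "F \<in> S \<longleftrightarrow> F \<in> Fl (Suc n) \<beta> \<and> rel_pos (std_flag \<alpha>) F M" by (simp add: S_def)
  also have "\<dots> \<longleftrightarrow> F \<in> Fl (Suc n) \<beta> \<and> (\<forall>i\<le>k. \<forall>j\<le>l. card (ambient (d i) \<inter> F ! j) = (card (UNIV::'a set)) ^ DD M i j)"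
    using relpos_iff[of F "Suc n" \<beta> \<alpha> M] by auto
  finally show ?thesis by (simp add: Fl_iff)
qed

lemma ambient_d': "i \<le> k \<Longrightarrow> (ambient (sum_list (take i \<alpha>')) :: (nat \<Rightarrow> 'a) set) = ambient (d i) \<inter> H"
  by (simp add: d'_eq H_def)

lemma map_S':
  assumes FS: "F \<in> S"
  shows "map (\<lambda>X. X \<inter> H) F \<in> S' (jump F)"
proof -
  define j0 where "j0 = jump F"
  define G where "G = map (\<lambda>X. X \<inter> H) F"
  note jp = jump_props[OF FS, folded j0_def]
  have j0J: "j0 \<in> J" unfolding j0_def using jump_J[OF FS] .
  have len: "length G = Suc l" using S_D(1)[OF FS] by (simp add: G_def)
  have Gj: "\<And>j. j \<le> l \<Longrightarrow> G ! j = F ! j \<inter> H" using S_D(1)[OF FS] by (simp add: G_def)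
  have cG: "\<And>j. j \<le> l \<Longrightarrow> card (G ! j) = (card (UNIV::'a set)) ^ sum_list (take j (\<beta>' j0))"
    using card_FH[OF FS] Gj unfolding j0_def by simp
  have "\<forall>i\<le>k. \<forall>j\<le>l. card (ambient (sum_list (take i \<alpha>')) \<inter> G ! j) = (card (UNIV::'a set)) ^ DD (M' j0) i j"
  proof (intro allI impI)
    fix i j assume i: "i \<le> k" and j: "j \<le> l"
    show "card (ambient (sum_list (take i \<alpha>')) \<inter> G ! j) = (card (UNIV::'a set)) ^ DD (M' j0) i j"
    proof (cases "i < i0")
      case True
      then have "ambient (d i) \<subseteq> H" unfolding H_def using d_less[of i] by (intro ambient_mono) simp
      then have "ambient (sum_list (take i \<alpha>')) \<inter> G ! j = ambient (d i) \<inter> F ! j"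
        using ambient_d'[OF i] Gj[OF j] by auto
      moreover have "DD (M' j0) i j = DD M i j" using DD_M'[OF j0J, of i j] True by simp
      ultimately show ?thesis using S_D(6)[OF FS i j] by simp
    next
      case False
      then have "ambient (d i) = ambient (Suc n)" using d_ge[of i] i by simp
      then have "ambient (sum_list (take i \<alpha>')) \<inter> G ! j = G ! j"
        using ambient_d'[OF i] Gj[OF j] H_sub by auto
      moreover have "DD (M' j0) i j = sum_list (take j (\<beta>' j0))" using DD_beta'[OF j0J _ i j] False by simp
      ultimately show ?thesis using cG[OF j] by simp
    qed
  qed
  moreover have "\<forall>j\<le>l. fsubspace (G ! j) \<and> G ! j \<subseteq> ambient n \<and> card (G ! j) = (card (UNIV::'a set)) ^ sum_list (take j (\<beta>' j0))"
    using Gj cG S_D(2)[OF FS] H_subspace by (auto intro: vs.subspace_inter simp: H_def)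
  moreover have "\<forall>j<l. G ! j \<subseteq> G ! Suc j" using Gj S_D(5)[OF FS] by auto
  ultimately have "G \<in> S' j0" using len by (simp add: S'_iff)
  then show ?thesis unfolding G_def j0_def .
qed

end


lemma lext_shift:
  assumes "fsubspace G" "g \<in> G"
  shows "lext G (v + g) = lext G v"
proof (rule set_eqI, rule iffI)
  fix x assume "x \<in> lext G (v + g)"
  then obtain c h where h: "h \<in> G" "x = h + fscale c (v + g)" by (auto simp: lext_mem)
  have "h + fscale c g \<in> G" using assms h by (intro vs.subspace_add vs.subspace_scale) auto
  moreover have "x = (h + fscale c g) + fscale c v" using h by (simp add: fscale_def fun_eq_iff algebra_simps)
  ultimately show "x \<in> lext G v" unfolding lext_mem by blast
next
  fix x assume "x \<in> lext G v"
  then obtain c h where h: "h \<in> G" "x = h + fscale c v" by (auto simp: lext_mem)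
  have "h - fscale c g \<in> G" using assms h by (intro vs.subspace_diff vs.subspace_scale) auto
  moreover have "x = (h - fscale c g) + fscale c (v + g)" using h by (simp add: fscale_def fun_eq_iff algebra_simps)
  ultimately show "x \<in> lext G (v + g)" unfolding lext_mem by blast
qed

context step
begin

definition Av :: "(nat \<Rightarrow> 'a) set" where "Av = {v \<in> ambient (Suc n). v n = 1}"
definition ext :: "nat \<Rightarrow> (nat \<Rightarrow> 'a) set list \<Rightarrow> (nat \<Rightarrow> 'a) \<Rightarrow> (nat \<Rightarrow> 'a) set list" where
  "ext j0 G v = map (\<lambda>j. if j < j0 then G ! j else lext (G ! j) v) [0..<Suc l]"

lemma ext_len[simp]: "length (ext j0 G v) = Suc l" by (simp add: ext_def)

lemma ext_nth: "j \<le> l \<Longrightarrow> ext j0 G v ! j = (if j < j0 then G ! j else lext (G ! j) v)"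
  by (simp add: ext_def nth_map del: upt_Suc)

lemma card_Av: "card Av = (card (UNIV::'a set)) ^ n"
proof -
  have "Av = (\<lambda>h. h + unitvec n) ` ambient n"
  proof (rule set_eqI, rule iffI)
    fix v :: "nat \<Rightarrow> 'a" assume v: "v \<in> Av"
    have "v - unitvec n \<in> ambient n"
      unfolding ambient_def
    proof (clarsimp)
      fix i assume "n \<le> i"
      then show "v i = unitvec n i" using v by (cases "i = n") (auto simp: Av_def ambient_def unitvec_def)
    qed
    then show "v \<in> (\<lambda>h. h + unitvec n) ` ambient n" by (intro image_eqI[of _ _ "v - unitvec n"]) auto
  next
    fix v :: "nat \<Rightarrow> 'a" assume "v \<in> (\<lambda>h. h + unitvec n) ` ambient n"
    then obtain h where "h \<in> ambient n" "v = h + unitvec n" by auto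
    then show "v \<in> Av" by (auto simp: Av_def ambient_def unitvec_def)
  qed
  moreover have "inj_on (\<lambda>h. h + unitvec n) (ambient n :: (nat \<Rightarrow> 'a) set)" by (auto intro: inj_onI)
  ultimately show ?thesis by (simp add: card_image card_ambient)
qed

lemma Av_H: "v \<in> Av \<Longrightarrow> v \<notin> H" by (auto simp: Av_def H_def ambient_def)

lemma ext_in:
  assumes j0J: "j0 \<in> J" and GS: "G \<in> S' j0" and v: "v \<in> Av"
  shows "ext j0 G v \<in> S" "jump (ext j0 G v) = j0" "map (\<lambda>X. X \<inter> H) (ext j0 G v) = G"
proof -
  define F where "F = ext j0 G v"
  have G: "length G = Suc l"
    "\<And>j. j \<le> l \<Longrightarrow> fsubspace (G ! j)" "\<And>j. j \<le> l \<Longrightarrow> G ! j \<subseteq> ambient n"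
    "\<And>j. j \<le> l \<Longrightarrow> card (G ! j) = (card (UNIV::'a set)) ^ sum_list (take j (\<beta>' j0))"
    "\<forall>j<l. G ! j \<subseteq> G ! Suc j"
    "\<And>i j. i \<le> k \<Longrightarrow> j \<le> l \<Longrightarrow> card (ambient (sum_list (take i \<alpha>')) \<inter> G ! j) = (card (UNIV::'a set)) ^ DD (M' j0) i j"
    using GS by (auto simp: S'_iff)
  have v1: "v n = 1" "v \<in> ambient (Suc n)" using v by (auto simp: Av_def)
  have j0l: "1 \<le> j0" "j0 \<le> l" using j0J by (auto simp: J_def)
  have Fj: "\<And>j. j \<le> l \<Longrightarrow> F ! j = (if j < j0 then G ! j else lext (G ! j) v)"
    unfolding F_def by (rule ext_nth)
  have amb: "\<And>j. j \<le> l \<Longrightarrow> G ! j \<subseteq> ambient (Suc n)"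
    using G(3) ambient_mono[of n "Suc n"] by force
  have FH: "\<And>j. j \<le> l \<Longrightarrow> F ! j \<inter> H = G ! j"
  proof -
    fix j assume j: "j \<le> l"
    show "F ! j \<inter> H = G ! j"
    proof (cases "j < j0")
      case True then show ?thesis using Fj[OF j] G(3)[OF j] by (auto simp: H_def)
    next
      case False then show ?thesis using Fj[OF j] lext_Int[of "G ! j" n v] G(3)[OF j] v1(1) G(2)[OF j] by (simp add: H_def)
    qed
  qed
  have sub: "\<And>j. j \<le> l \<Longrightarrow> fsubspace (F ! j)"
  proof -
    fix j assume j: "j \<le> l"
    show "fsubspace (F ! j)"
    proof (cases "j < j0")
      case True then show ?thesis using Fj[OF j] G(2)[OF j] by simp
    next
      case False then show ?thesis using Fj[OF j] lext_subspace[OF G(2)[OF j], of v] by simp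
    qed
  qed
  have famb: "\<And>j. j \<le> l \<Longrightarrow> F ! j \<subseteq> ambient (Suc n)"
    using Fj amb lext_ambient[OF _ v1(2)] by auto
  have cF: "\<And>j. j \<le> l \<Longrightarrow> card (F ! j) = (card (UNIV::'a set)) ^ sum_list (take j \<beta>)"
  proof -
    fix j assume j: "j \<le> l"
    note tb = take_beta'[OF j0J j]
    show "card (F ! j) = (card (UNIV::'a set)) ^ sum_list (take j \<beta>)"
    proof (cases "j < j0")
      case True then show ?thesis using Fj[OF j] G(4)[OF j] tb by simp
    next
      case False
      then have e: "sum_list (take j \<beta>) = Suc (sum_list (take j (\<beta>' j0)))" using tb by simp
      have "card (F ! j) = (card (UNIV::'a set)) * card (G ! j)" using Fj[OF j] False card_lext[of "G ! j" n v] G(3)[OF j] v1(1) by simp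
      then show ?thesis using G(4)[OF j] unfolding e by simp
    qed
  qed
  have chain: "\<forall>j<l. F ! j \<subseteq> F ! Suc j"
  proof (intro allI impI)
    fix j assume j: "j < l"
    show "F ! j \<subseteq> F ! Suc j"
    proof (cases "Suc j < j0")
      case True then show ?thesis using Fj[of j] Fj[of "Suc j"] j G(5) by simp
    next
      case False
      have GG: "G ! j \<subseteq> G ! Suc j" using G(5) j by simp
      show ?thesis
      proof (cases "j < j0")
        case True
        have "G ! Suc j \<subseteq> lext (G ! Suc j) v" using lext_sub[OF G(2)[of "Suc j"]] j by simp
        then show ?thesis using Fj[of j] Fj[of "Suc j"] j False GG True by auto
      next
        case False
        then show ?thesis using Fj[of j] Fj[of "Suc j"] j GG lext_mono by simp
      qed
    qed
  qed
  have rp: "\<forall>i\<le>k. \<forall>j\<le>l. card (ambient (d i) \<inter> F ! j) = (card (UNIV::'a set)) ^ DD M i j"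
  proof (intro allI impI)
    fix i j assume i: "i \<le> k" and j: "j \<le> l"
    show "card (ambient (d i) \<inter> F ! j) = (card (UNIV::'a set)) ^ DD M i j"
    proof (cases "i < i0")
      case True
      then have aH: "ambient (d i) \<subseteq> H" unfolding H_def using d_less[of i] by (intro ambient_mono) simp
      then have "ambient (d i) \<inter> F ! j = ambient (d i) \<inter> (F ! j \<inter> H)" by auto
      also have "\<dots> = ambient (sum_list (take i \<alpha>')) \<inter> G ! j" using FH[OF j] ambient_d'[OF i] aH by auto
      finally have "card (ambient (d i) \<inter> F ! j) = (card (UNIV::'a set)) ^ DD (M' j0) i j" using G(6)[OF i j] by simp
      moreover have "DD (M' j0) i j = DD M i j" using DD_M'[OF j0J, of i j] True by simp
      ultimately show ?thesis by simp
    next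
      case False
      then have "ambient (d i) = ambient (Suc n)" using d_ge[of i] i by simp
      then have "ambient (d i) \<inter> F ! j = F ! j" using famb[OF j] by auto
      then show ?thesis using cF[OF j] DD_beta[of i j] False i j by simp
    qed
  qed
  show FS: "ext j0 G v \<in> S" unfolding F_def[symmetric] S_iff using sub famb cF chain rp by (auto simp: F_def)
  show "map (\<lambda>X. X \<inter> H) (ext j0 G v) = G"
    unfolding F_def[symmetric]
  proof (rule nth_equalityI)
    show "length (map (\<lambda>X. X \<inter> H) F) = length G" using G(1) by (simp add: F_def)
    fix i assume "i < length (map (\<lambda>X. X \<inter> H) F)"
    then have "i \<le> l" by (simp add: F_def)
    then show "map (\<lambda>X. X \<inter> H) F ! i = G ! i" using FH by (simp add: F_def)
  qed
  show "jump (ext j0 G v) = j0"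
    unfolding F_def[symmetric] jump_def
  proof (rule Least_equality)
    show "\<not> F ! j0 \<subseteq> H" using Fj[OF j0l(2)] lext_v[OF G(2)[OF j0l(2)]] Av_H[OF v] by auto
    fix y assume "\<not> F ! y \<subseteq> H"
    then show "j0 \<le> y"
    proof (rule contrapos_np)
      assume "\<not> j0 \<le> y"
      then show "F ! y \<subseteq> H" using Fj[of y] j0l G(3)[of y] by (simp add: H_def)
    qed
  qed
qed

lemma fiber_eq:
  assumes j0J: "j0 \<in> J" and GS: "G \<in> S' j0"
  shows "{F \<in> S. (jump F, map (\<lambda>X. X \<inter> H) F) = (j0, G)} = ext j0 G ` Av"
proof (rule set_eqI, rule iffI)
  fix F assume "F \<in> ext j0 G ` Av"
  then obtain v where "v \<in> Av" "F = ext j0 G v" by auto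
  then show "F \<in> {F \<in> S. (jump F, map (\<lambda>X. X \<inter> H) F) = (j0, G)}" using ext_in[OF j0J GS] by auto
next
  fix F assume "F \<in> {F \<in> S. (jump F, map (\<lambda>X. X \<inter> H) F) = (j0, G)}"
  then have FS: "F \<in> S" and jF: "jump F = j0" and mG: "map (\<lambda>X. X \<inter> H) F = G" by auto
  note jp = jump_props[OF FS, unfolded jF]
  obtain v where v: "v \<in> F ! j0" "v n = 1"
    using hyper_vec[of "F ! j0" n] S_D(2,3)[OF FS] jp by (auto simp: H_def)
  have vA: "v \<in> Av" using v S_D(3)[OF FS, of j0] jp by (auto simp: Av_def)
  have Gj: "\<And>j. j \<le> l \<Longrightarrow> G ! j = F ! j \<inter> H" using mG[symmetric] S_D(1)[OF FS] by auto
  have "F = ext j0 G v"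
  proof (rule nth_equalityI)
    show "length F = length (ext j0 G v)" using S_D(1)[OF FS] by simp
    fix j assume "j < length F"
    then have j: "j \<le> l" using S_D(1)[OF FS] by simp
    show "F ! j = ext j0 G v ! j"
    proof (cases "j < j0")
      case True
      then show ?thesis using jp(4)[OF True] Gj[OF j] ext_nth[OF j] by auto
    next
      case False
      have "v \<in> F ! j" using v chain_mono[OF S_D(5)[OF FS], of j0 j] False j by auto
      then have "F ! j = lext (F ! j \<inter> ambient n) v"
        using hyper_decomp[of "F ! j" n v] S_D(2,3)[OF FS j] v by simp
      then show ?thesis using Gj[OF j] ext_nth[OF j] False by (simp add: H_def)
    qed
  qed
  then show "F \<in> ext j0 G ` Av" using vA by auto
qed

lemma ext_fiber:
  assumes j0J: "j0 \<in> J" and GS: "G \<in> S' j0" and v: "v \<in> Av"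
  shows "{w \<in> Av. ext j0 G w = ext j0 G v} = (\<lambda>g. v + g) ` (G ! j0)"
proof -
  have G: "length G = Suc l"
    "\<And>j. j \<le> l \<Longrightarrow> fsubspace (G ! j)" "\<And>j. j \<le> l \<Longrightarrow> G ! j \<subseteq> ambient n"
    "\<forall>j<l. G ! j \<subseteq> G ! Suc j"
    using GS by (auto simp: S'_iff)
  have j0l: "j0 \<le> l" using j0J by (auto simp: J_def)
  have v1: "v n = 1" "v \<in> ambient (Suc n)" using v by (auto simp: Av_def)
  show ?thesis
  proof (rule set_eqI, rule iffI)
    fix w assume "w \<in> {w \<in> Av. ext j0 G w = ext j0 G v}"
    then have w: "w \<in> Av" "ext j0 G w = ext j0 G v" by auto
    have "ext j0 G w ! j0 = ext j0 G v ! j0" using w by simp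
    then have "lext (G ! j0) w = lext (G ! j0) v" using ext_nth[OF j0l] by simp
    moreover have "w \<in> lext (G ! j0) w" using lext_v[OF G(2)[OF j0l]] by blast
    ultimately have "w \<in> lext (G ! j0) v" by simp
    then obtain c g where cg: "g \<in> G ! j0" "w = g + fscale c v" by (auto simp: lext_mem)
    have "g n = 0" using cg G(3)[OF j0l] by (auto simp: ambient_def)
    moreover have "w n = 1" using w by (simp add: Av_def)
    ultimately have "c = 1" using cg v1 by (simp add: fscale_def)
    then have "w = v + g" using cg by (simp add: fscale_def fun_eq_iff)
    then show "w \<in> (\<lambda>g. v + g) ` (G ! j0)" using cg by auto
  next
    fix w assume "w \<in> (\<lambda>g. v + g) ` (G ! j0)"
    then obtain g where g: "g \<in> G ! j0" "w = v + g" by auto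
    have gn: "g \<in> ambient n" using g G(3)[OF j0l] by auto
    have wA: "w \<in> Av" using g gn v1 by (auto simp: Av_def ambient_def)
    have "ext j0 G w = ext j0 G v"
    proof (rule nth_equalityI)
      show "length (ext j0 G w) = length (ext j0 G v)" by simp
      fix j assume "j < length (ext j0 G w)"
      then have j: "j \<le> l" by simp
      show "ext j0 G w ! j = ext j0 G v ! j"
      proof (cases "j < j0")
        case True then show ?thesis using ext_nth[OF j] by simp
      next
        case False
        then have "g \<in> G ! j" using g chain_mono[OF G(4), of j0 j] j by auto
        then show ?thesis using ext_nth[OF j] False lext_shift[OF G(2)[OF j], of g v] g by simp
      qed
    qed
    then show "w \<in> {w \<in> Av. ext j0 G w = ext j0 G v}" using wA by simp
  qed
qed

lemma sum_take_le: "sum_list (take j (xs :: nat list)) \<le> sum_list xs"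
proof -
  have "sum_list xs = sum_list (take j xs) + sum_list (drop j xs)"
    by (metis append_take_drop_id sum_list_append)
  then show ?thesis by simp
qed

lemma card_fiber:
  assumes j0J: "j0 \<in> J" and GS: "G \<in> S' j0"
  shows "card {F \<in> S. (jump F, map (\<lambda>X. X \<inter> H) F) = (j0, G)} = (card (UNIV::'a set)) ^ (Suc n - DD M k j0)"
proof -
  have G: "\<And>j. j \<le> l \<Longrightarrow> fsubspace (G ! j)" "\<And>j. j \<le> l \<Longrightarrow> G ! j \<subseteq> ambient n"
    "\<And>j. j \<le> l \<Longrightarrow> card (G ! j) = (card (UNIV::'a set)) ^ sum_list (take j (\<beta>' j0))"
    using GS by (auto simp: S'_iff)
  have j0l: "j0 \<le> l" using j0J by (auto simp: J_def)
  have finAv: "finite Av" using finite_sub_ambient[of Av "Suc n"] by (auto simp: Av_def)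
  have finG: "finite (G ! j0)" using G(2)[OF j0l] finite_sub_ambient by blast
  have "card Av = card (ext j0 G ` Av) * card (G ! j0)"
  proof (rule card_uniform[OF finAv])
    fix y assume "y \<in> ext j0 G ` Av"
    then obtain v where v: "v \<in> Av" "y = ext j0 G v" by auto
    have "{x \<in> Av. ext j0 G x = y} = (\<lambda>g. v + g) ` (G ! j0)" using ext_fiber[OF j0J GS v(1)] v by simp
    moreover have "inj_on (\<lambda>g. v + g) (G ! j0)" by (auto intro: inj_onI)
    ultimately show "card {x \<in> Av. ext j0 G x = y} = card (G ! j0)" by (simp add: card_image)
  qed
  moreover have e: "DD M k j0 = Suc (sum_list (take j0 (\<beta>' j0)))"
    using DD_beta[of k j0] i0_props j0l take_beta'[OF j0J j0l] by simp
  moreover have "DD M k j0 \<le> Suc n" using DD_beta[of k j0] i0_props j0l sum_take_le[of j0 \<beta>] beta by simp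
  ultimately have "(card (UNIV::'a set)) ^ n = card (ext j0 G ` Av) * (card (UNIV::'a set)) ^ (n - (Suc n - DD M k j0))"
    using card_Av G(3)[OF j0l] by simp
  moreover have "(card (UNIV::'a set)) ^ n = (card (UNIV::'a set)) ^ (Suc n - DD M k j0) * (card (UNIV::'a set)) ^ (n - (Suc n - DD M k j0))"
    using e \<open>DD M k j0 \<le> Suc n\<close> by (simp add: power_add[symmetric])
  ultimately have "card (ext j0 G ` Av) = (card (UNIV::'a set)) ^ (Suc n - DD M k j0)" using Q_pos by simp
  then show ?thesis using fiber_eq[OF j0J GS] by simp
qed

lemma finite_S: "finite S"
proof (rule finite_subset)
  show "S \<subseteq> {xs. set xs \<subseteq> Pow (ambient (Suc n)) \<and> length xs = Suc l}"
  proof (rule subsetI, rule CollectI, rule conjI)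
    fix F assume FS: "F \<in> S"
    show "length F = Suc l" using S_D(1)[OF FS] .
    show "set F \<subseteq> Pow (ambient (Suc n))"
    proof
      fix x assume "x \<in> set F"
      then obtain j where "j < length F" "x = F ! j" by (auto simp: in_set_conv_nth)
      then show "x \<in> Pow (ambient (Suc n))" using S_D(1,3)[OF FS] by auto
    qed
  qed
  show "finite {xs. set xs \<subseteq> Pow (ambient (Suc n) :: (nat \<Rightarrow> 'a) set) \<and> length xs = Suc l}"
    by (intro finite_lists_length_eq) (simp add: finite_ambient)
qed

lemma finite_S': "finite (S' j0)"
proof (rule finite_subset)
  show "S' j0 \<subseteq> {xs. set xs \<subseteq> Pow (ambient n) \<and> length xs = Suc l}"
  proof (rule subsetI, rule CollectI, rule conjI)
    fix F assume FS: "F \<in> S' j0"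
    show "length F = Suc l" using FS by (simp add: S'_iff)
    show "set F \<subseteq> Pow (ambient n)"
    proof
      fix x assume "x \<in> set F"
      then obtain j where "j < length F" "x = F ! j" by (auto simp: in_set_conv_nth)
      then show "x \<in> Pow (ambient n)" using FS by (auto simp: S'_iff)
    qed
  qed
  show "finite {xs. set xs \<subseteq> Pow (ambient n :: (nat \<Rightarrow> 'a) set) \<and> length xs = Suc l}"
    by (intro finite_lists_length_eq) (simp add: finite_ambient)
qed

lemma recurrence: "card S = (\<Sum>j0\<in>J. card (S' j0) * (card (UNIV::'a set)) ^ (Suc n - DD M k j0))"
proof -
  have finJ: "finite J" using J_sub finite_subset by blast
  have "card S = (\<Sum>y\<in>Sigma J S'. card {F \<in> S. (jump F, map (\<lambda>X. X \<inter> H) F) = y})"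
  proof (rule card_fibers[OF finite_S])
    show "(\<lambda>F. (jump F, map (\<lambda>X. X \<inter> H) F)) ` S \<subseteq> Sigma J S'" using jump_J map_S' by blast
    show "finite (Sigma J S')" using finJ finite_S' by blast
  qed
  also have "\<dots> = (\<Sum>j0\<in>J. \<Sum>G\<in>S' j0. card {F \<in> S. (jump F, map (\<lambda>X. X \<inter> H) F) = (j0, G)})"
    using sum.Sigma[OF finJ, of S' "\<lambda>j0 G. card {F \<in> S. (jump F, map (\<lambda>X. X \<inter> H) F) = (j0, G)}"] finite_S'
    by (simp add: split_def prod_eq_iff)
  also have "\<dots> = (\<Sum>j0\<in>J. \<Sum>G\<in>S' j0. (card (UNIV::'a set)) ^ (Suc n - DD M k j0))"
    by (intro sum.cong refl card_fiber) auto
  also have "\<dots> = (\<Sum>j0\<in>J. card (S' j0) * (card (UNIV::'a set)) ^ (Suc n - DD M k j0))" by simp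
  finally show ?thesis .
qed

end


definition exq :: "nat \<Rightarrow> nat \<Rightarrow> (nat \<Rightarrow> nat \<Rightarrow> nat) \<Rightarrow> nat" where
  "exq k l M = (\<Sum>(i, j, i', j') \<in> {(i, j, i', j').
              1 \<le> i' \<and> i' \<le> i \<and> i \<le> k \<and> 1 \<le> j \<and> j < j' \<and> j' \<le> l}. M i j * M i' j')"

definition RR :: "nat \<Rightarrow> (nat \<Rightarrow> nat \<Rightarrow> nat) \<Rightarrow> nat \<Rightarrow> nat \<Rightarrow> nat" where
  "RR l M i j = (\<Sum>i'\<in>{1..i}. \<Sum>j'\<in>{j<..l}. M i' j')"

lemma exq_nested: "exq k l M = (\<Sum>i\<in>{1..k}. \<Sum>j\<in>{1..l}. M i j * RR l M i j)"
proof -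
  have T: "{(i, j, i', j'). 1 \<le> i' \<and> i' \<le> i \<and> i \<le> k \<and> 1 \<le> j \<and> j < j' \<and> j' \<le> l}
     = Sigma {1..k} (\<lambda>i. Sigma {1..l} (\<lambda>j. Sigma {1..i} (\<lambda>i'. {j<..l})))" by auto
  have "exq k l M = (\<Sum>(i, j, i', j') \<in> Sigma {1..k} (\<lambda>i. Sigma {1..l} (\<lambda>j. Sigma {1..i} (\<lambda>i'. {j<..l}))). M i j * M i' j')"
    unfolding exq_def T ..
  also have "\<dots> = (\<Sum>i\<in>{1..k}. \<Sum>(j, i', j') \<in> Sigma {1..l} (\<lambda>j. Sigma {1..i} (\<lambda>i'. {j<..l})). M i j * M i' j')"
    by (subst sum.Sigma[symmetric]) (auto simp: split_def)
  also have "\<dots> = (\<Sum>i\<in>{1..k}. \<Sum>j\<in>{1..l}. \<Sum>(i', j') \<in> Sigma {1..i} (\<lambda>i'. {j<..l}). M i j * M i' j')"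
    by (intro sum.cong refl, subst sum.Sigma[symmetric]) (auto simp: split_def)
  also have "\<dots> = (\<Sum>i\<in>{1..k}. \<Sum>j\<in>{1..l}. \<Sum>i'\<in>{1..i}. \<Sum>j'\<in>{j<..l}. M i j * M i' j')"
    by (intro sum.cong refl, subst sum.Sigma[symmetric]) (auto simp: split_def)
  also have "\<dots> = (\<Sum>i\<in>{1..k}. \<Sum>j\<in>{1..l}. M i j * RR l M i j)"
    by (simp add: RR_def sum_distrib_left)
  finally show ?thesis .
qed

lemma sum_delta2:
  fixes f :: "nat \<Rightarrow> nat \<Rightarrow> nat"
  assumes "a \<in> A" "b \<in> B" "finite A" "finite B"
  shows "(\<Sum>i\<in>A. \<Sum>j\<in>B. (if i = a \<and> j = b then 1 else 0) * f i j) = f a b"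
proof -
  have e: "\<And>i j. (if i = a \<and> j = b then 1 else 0) * f i j = (if j = b then (if i = a then f i j else 0) else 0)"
    by auto
  have "\<And>i. (\<Sum>j\<in>B. (if i = a \<and> j = b then 1 else 0) * f i j) = (if i = a then f a b else 0)"
    unfolding e using assms by (simp add: sum.delta)
  then show ?thesis using assms by (simp add: sum.delta)
qed

lemma exq_inc:
  fixes N :: "nat \<Rightarrow> nat \<Rightarrow> nat"
  assumes a: "1 \<le> a" "a \<le> k" and b: "1 \<le> b" "b \<le> l"
  shows "exq k l (\<lambda>i j. N i j + (if i = a \<and> j = b then 1 else 0))
       = exq k l N + RR l N a b + (\<Sum>i\<in>{1..k}. \<Sum>j\<in>{1..l}. if a \<le> i \<and> j < b then N i j else 0)"
proof -
  define \<delta> where "\<delta> = (\<lambda>i j. if i = a \<and> j = b then 1 else (0::nat))"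
  define \<iota> where "\<iota> = (\<lambda>i j. if a \<le> i \<and> j < b then 1 else (0::nat))"
  let ?M = "\<lambda>i j. N i j + \<delta> i j"
  have R: "\<And>i j. RR l ?M i j = RR l N i j + \<iota> i j"
  proof -
    fix i j
    have "RR l ?M i j = RR l N i j + (\<Sum>i'\<in>{1..i}. \<Sum>j'\<in>{j<..l}. \<delta> i' j')"
      by (simp add: RR_def sum.distrib)
    moreover have "(\<Sum>i'\<in>{1..i}. \<Sum>j'\<in>{j<..l}. \<delta> i' j') = \<iota> i j"
    proof -
      have "\<And>i'. (\<Sum>j'\<in>{j<..l}. \<delta> i' j') = (if i' = a \<and> j < b then 1 else 0)"
        using b by (auto simp: \<delta>_def sum.delta cong: if_cong)
      then show ?thesis using a by (auto simp: \<iota>_def sum.delta cong: if_cong)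
    qed
    ultimately show "RR l ?M i j = RR l N i j + \<iota> i j" by simp
  qed
  have pt: "\<And>i j. ?M i j * RR l ?M i j = N i j * RR l N i j + N i j * \<iota> i j + \<delta> i j * RR l N i j + \<delta> i j * \<iota> i j"
    by (simp add: R algebra_simps)
  have "exq k l ?M = (\<Sum>i\<in>{1..k}. \<Sum>j\<in>{1..l}. N i j * RR l N i j + N i j * \<iota> i j + \<delta> i j * RR l N i j + \<delta> i j * \<iota> i j)"
    unfolding exq_nested pt ..
  also have "\<dots> = exq k l N + (\<Sum>i\<in>{1..k}. \<Sum>j\<in>{1..l}. N i j * \<iota> i j)
      + (\<Sum>i\<in>{1..k}. \<Sum>j\<in>{1..l}. \<delta> i j * RR l N i j) + (\<Sum>i\<in>{1..k}. \<Sum>j\<in>{1..l}. \<delta> i j * \<iota> i j)"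
    by (simp add: exq_nested sum.distrib)
  also have "(\<Sum>i\<in>{1..k}. \<Sum>j\<in>{1..l}. \<delta> i j * RR l N i j) = RR l N a b"
    unfolding \<delta>_def by (rule sum_delta2) (use a b in auto)
  also have "(\<Sum>i\<in>{1..k}. \<Sum>j\<in>{1..l}. \<delta> i j * \<iota> i j) = \<iota> a b"
    unfolding \<delta>_def by (rule sum_delta2) (use a b in auto)
  also have "\<iota> a b = 0" by (simp add: \<iota>_def)
  also have "(\<Sum>i\<in>{1..k}. \<Sum>j\<in>{1..l}. N i j * \<iota> i j) = (\<Sum>i\<in>{1..k}. \<Sum>j\<in>{1..l}. if a \<le> i \<and> j < b then N i j else 0)"
    by (intro sum.cong refl) (auto simp: \<iota>_def)
  finally show ?thesis by (simp add: \<delta>_def)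
qed

definition qsum :: "real \<Rightarrow> nat \<Rightarrow> real" where "qsum q m = (\<Sum>t<m. q ^ t)"

lemma qfact_Suc: "qfact q (Suc m) = qfact q m * qsum q (Suc m)"
  by (simp add: qfact_def qsum_def)

lemma qsum_pos: "q > 0 \<Longrightarrow> m \<ge> 1 \<Longrightarrow> qsum q m > 0"
  unfolding qsum_def by (rule sum_pos2[of _ 0]) auto

lemma qfact_alt: "qfact q m = (\<Prod>r\<in>{1..m}. qsum q r)" by (simp add: qfact_def qsum_def)

lemma qfact_pos: "q > 0 \<Longrightarrow> qfact q m > 0"
  unfolding qfact_alt by (intro prod_pos) (auto intro: qsum_pos)

lemma qsum_0[simp]: "qsum q 0 = 0" by (simp add: qsum_def)

lemma qsum_add: "qsum q (a + b) = qsum q a + q ^ a * qsum q b"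
  by (induction b) (auto simp: qsum_def algebra_simps power_add)

lemma qsum_telescope:
  fixes L :: nat and m :: "nat \<Rightarrow> nat"
  shows "(\<Sum>j\<in>{1..L}. q ^ (\<Sum>j'\<in>{1..<j}. m j') * qsum q (m j)) = qsum q (\<Sum>j\<in>{1..L}. m j)"
proof (induction L)
  case 0 then show ?case by simp
next
  case (Suc L)
  have "{1..<Suc L} = {1..L}" by auto
  then show ?case using Suc by (simp add: qsum_add)
qed

lemma prod_change:
  fixes f f' :: "'b \<Rightarrow> real"
  assumes "finite A" "a \<in> A" "\<And>x. x \<in> A \<Longrightarrow> x \<noteq> a \<Longrightarrow> f x = f' x"
  shows "prod f A * f' a = prod f' A * f a"
proof -
  have "prod f A = f a * prod f (A - {a})" "prod f' A = f' a * prod f' (A - {a})"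
    using assms by (simp_all add: prod.remove)
  moreover have "prod f (A - {a}) = prod f' (A - {a})" using assms by (intro prod.cong) auto
  ultimately show ?thesis by simp
qed


definition rhs :: "real \<Rightarrow> nat list \<Rightarrow> nat list \<Rightarrow> (nat \<Rightarrow> nat \<Rightarrow> nat) \<Rightarrow> real" where
  "rhs q \<alpha> \<beta> M = inverse q ^ exq (length \<alpha>) (length \<beta>) M
         * (\<Prod>i\<in>{1..length \<alpha>}. qfact q (\<alpha> ! (i - 1)))
         / (\<Prod>i\<in>{1..length \<alpha>}. \<Prod>j\<in>{1..length \<beta>}. qfact q (M i j))"

context step
begin

definition sj where "sj j0 = (\<Sum>j\<in>{1..<j0}. M i0 j)"

lemma M_eq: "j0 \<in> J \<Longrightarrow> M = (\<lambda>i j. M' j0 i j + (if i = i0 \<and> j = j0 then 1 else 0))"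
  by (auto simp: M'_def J_def fun_eq_iff)

lemma exq_split: "j0 \<in> J \<Longrightarrow> exq k l M = exq k l (M' j0) + (Suc n - DD M k j0) + sj j0"
proof -
  assume j0J: "j0 \<in> J"
  have j0l: "1 \<le> j0" "j0 \<le> l" using j0J by (auto simp: J_def)
  have "exq k l M = exq k l (M' j0) + RR l (M' j0) i0 j0
      + (\<Sum>i\<in>{1..k}. \<Sum>j\<in>{1..l}. if i0 \<le> i \<and> j < j0 then M' j0 i j else 0)"
    by (subst M_eq[OF j0J], rule exq_inc) (use i0_props j0l in auto)
  moreover have "RR l (M' j0) i0 j0 = Suc n - DD M k j0"
  proof -
    have "RR l (M' j0) i0 j0 = RR l M i0 j0" unfolding RR_def M'_def by (intro sum.cong refl) auto
    moreover have "RR l M i0 j0 + DD M i0 j0 = DD M i0 l"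
    proof -
      have "\<And>i'. (\<Sum>j'\<in>{j0<..l}. M i' j') + (\<Sum>j'\<in>{1..j0}. M i' j') = (\<Sum>j'\<in>{1..l}. M i' j')"
      proof -
        fix i'
        have "{1..l} = {1..j0} \<union> {j0<..l}" using j0l by auto
        then have "(\<Sum>j'\<in>{1..l}. M i' j') = (\<Sum>j'\<in>{1..j0} \<union> {j0<..l}. M i' j')" by simp
        also have "\<dots> = (\<Sum>j'\<in>{1..j0}. M i' j') + (\<Sum>j'\<in>{j0<..l}. M i' j')"
          by (rule sum.union_disjoint) auto
        finally show "(\<Sum>j'\<in>{j0<..l}. M i' j') + (\<Sum>j'\<in>{1..j0}. M i' j') = (\<Sum>j'\<in>{1..l}. M i' j')"
          by simp
      qed
      then show ?thesis unfolding RR_def DD_def by (simp add: sum.distrib[symmetric])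
    qed
    moreover have "DD M i0 l = Suc n" using DD_beta[of i0 l] i0_props beta by simp
    moreover have "DD M i0 j0 = DD M k j0" using DD_beta[of i0 j0] DD_beta[of k j0] i0_props j0l by simp
    ultimately show ?thesis by simp
  qed
  moreover have "(\<Sum>i\<in>{1..k}. \<Sum>j\<in>{1..l}. if i0 \<le> i \<and> j < j0 then M' j0 i j else 0) = sj j0"
  proof -
    have "\<And>i. i \<in> {1..k} \<Longrightarrow> (\<Sum>j\<in>{1..l}. if i0 \<le> i \<and> j < j0 then M' j0 i j else 0)
            = (if i = i0 then sj j0 else 0)"
    proof -
      fix i assume i: "i \<in> {1..k}"
      show "(\<Sum>j\<in>{1..l}. if i0 \<le> i \<and> j < j0 then M' j0 i j else 0) = (if i = i0 then sj j0 else 0)"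
      proof (cases "i = i0")
        case True
        have "(\<Sum>j\<in>{1..l}. if j < j0 then M i0 j else 0) = (\<Sum>j\<in>{1..l} \<inter> {..<j0}. M i0 j)"
          by (simp add: sum.inter_restrict)
        also have "{1..l} \<inter> {..<j0} = {1..<j0}" using j0l by auto
        finally show ?thesis using True by (simp add: M'_def sj_def cong: if_cong)
      next
        case False
        have "\<And>j. j \<in> {1..l} \<Longrightarrow> (if i0 \<le> i \<and> j < j0 then M' j0 i j else 0) = 0"
          using zero_rows False i by (auto simp: M'_def)
        then show ?thesis using False by simp
      qed
    qed
    then have "(\<Sum>i\<in>{1..k}. \<Sum>j\<in>{1..l}. if i0 \<le> i \<and> j < j0 then M' j0 i j else 0)
          = (\<Sum>i\<in>{1..k}. if i = i0 then sj j0 else 0)" by (rule sum.cong[OF refl])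
    also have "\<dots> = sj j0" using i0_props by (simp add: sum.delta)
    finally show ?thesis .
  qed
  ultimately show ?thesis by simp
qed

lemma PA_split:
  assumes "q > 0"
  shows "(\<Prod>i\<in>{1..k}. qfact q (\<alpha> ! (i - 1))) = (\<Prod>i\<in>{1..k}. qfact q (\<alpha>' ! (i - 1))) * qsum q (\<alpha> ! (i0 - 1))"
proof -
  have "(\<Prod>i\<in>{1..k}. qfact q (\<alpha>' ! (i - 1))) * qfact q (\<alpha> ! (i0 - 1))
      = (\<Prod>i\<in>{1..k}. qfact q (\<alpha> ! (i - 1))) * qfact q (\<alpha>' ! (i0 - 1))"
    by (rule prod_change) (use i0_props in \<open>auto simp: \<alpha>'_def nth_list_update\<close>)
  moreover have "\<alpha> ! (i0 - 1) = Suc (\<alpha>' ! (i0 - 1))" using alpha_i0 i0_props by (simp add: \<alpha>'_def)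
  moreover have "qfact q (\<alpha>' ! (i0 - 1)) > 0" using assms by (rule qfact_pos)
  ultimately show ?thesis by (simp add: qfact_Suc)
qed

lemma PM_split:
  assumes "q > 0" "j0 \<in> J"
  shows "(\<Prod>i\<in>{1..k}. \<Prod>j\<in>{1..l}. qfact q (M i j))
       = (\<Prod>i\<in>{1..k}. \<Prod>j\<in>{1..l}. qfact q (M' j0 i j)) * qsum q (M i0 j0)"
proof -
  have j0l: "1 \<le> j0" "j0 \<le> l" using assms by (auto simp: J_def)
  have inner: "(\<Prod>j\<in>{1..l}. qfact q (M' j0 i0 j)) * qfact q (M i0 j0)
      = (\<Prod>j\<in>{1..l}. qfact q (M i0 j)) * qfact q (M' j0 i0 j0)"
    by (rule prod_change) (use j0l in \<open>auto simp: M'_def\<close>)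
  have outer: "(\<Prod>i\<in>{1..k}. \<Prod>j\<in>{1..l}. qfact q (M' j0 i j)) * (\<Prod>j\<in>{1..l}. qfact q (M i0 j))
      = (\<Prod>i\<in>{1..k}. \<Prod>j\<in>{1..l}. qfact q (M i j)) * (\<Prod>j\<in>{1..l}. qfact q (M' j0 i0 j))"
    by (rule prod_change) (use i0_props in \<open>auto simp: M'_def\<close>)
  have MS: "M i0 j0 = Suc (M' j0 i0 j0)" using assms by (auto simp: M'_def J_def)
  have p1: "qfact q (M' j0 i0 j0) > 0" using assms by (intro qfact_pos) auto
  have p2: "(\<Prod>j\<in>{1..l}. qfact q (M' j0 i0 j)) > 0" using assms by (intro prod_pos qfact_pos) auto
  from inner have B: "(\<Prod>j\<in>{1..l}. qfact q (M i0 j)) = (\<Prod>j\<in>{1..l}. qfact q (M' j0 i0 j)) * qsum q (M i0 j0)"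
    using p1 MS by (simp add: qfact_Suc)
  define P where "P = (\<Prod>i\<in>{1..k}. \<Prod>j\<in>{1..l}. qfact q (M i j))"
  define P' where "P' = (\<Prod>i\<in>{1..k}. \<Prod>j\<in>{1..l}. qfact q (M' j0 i j))"
  define Bp where "Bp = (\<Prod>j\<in>{1..l}. qfact q (M' j0 i0 j))"
  have "(P' * qsum q (M i0 j0)) * Bp = P * Bp"
    using outer B unfolding P_def P'_def Bp_def by (simp add: algebra_simps)
  moreover have "Bp \<noteq> 0" using p2 unfolding Bp_def by linarith
  ultimately have "P' * qsum q (M i0 j0) = P" by (metis mult_right_cancel)
  then show ?thesis unfolding P_def P'_def by simp
qed

lemma term_eq:
  assumes q: "q = 1 / real (card (UNIV::'a set))" and j0J: "j0 \<in> J"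
  shows "rhs q \<alpha>' (\<beta>' j0) (M' j0) * real (card (UNIV::'a set)) ^ (Suc n - DD M k j0)
       = rhs q \<alpha> \<beta> M * (q ^ sj j0 * qsum q (M i0 j0)) / qsum q (\<alpha> ! (i0 - 1))"
proof -
  have Qp: "real (card (UNIV::'a set)) > 0" using Q_pos by simp
  have qp: "q > 0" using q Qp by simp
  have iq: "inverse q = real (card (UNIV::'a set))" using q by simp
  have qs: "q ^ sj j0 * real (card (UNIV::'a set)) ^ sj j0 = 1" using q Qp by (simp add: power_mult_distrib[symmetric])
  have a0: "qsum q (\<alpha> ! (i0 - 1)) > 0" using qp alpha_i0 by (intro qsum_pos)
  have m0: "qsum q (M i0 j0) > 0" using qp j0J by (intro qsum_pos) (auto simp: J_def)
  define X where "X = exq k l (M' j0)"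
  define c where "c = Suc n - DD M k j0"
  define PA' where "PA' = (\<Prod>i\<in>{1..k}. qfact q (\<alpha>' ! (i - 1)))"
  define PM' where "PM' = (\<Prod>i\<in>{1..k}. \<Prod>j\<in>{1..l}. qfact q (M' j0 i j))"
  have pm: "PM' > 0" unfolding PM'_def using qp by (intro prod_pos qfact_pos) auto
  have L: "rhs q \<alpha>' (\<beta>' j0) (M' j0) * real (card (UNIV::'a set)) ^ (Suc n - DD M k j0) = real (card (UNIV::'a set)) ^ X * PA' / PM' * real (card (UNIV::'a set)) ^ c"
    unfolding rhs_def X_def PA'_def PM'_def c_def iq by simp
  have R: "rhs q \<alpha> \<beta> M = real (card (UNIV::'a set)) ^ X * real (card (UNIV::'a set)) ^ c * real (card (UNIV::'a set)) ^ sj j0 * (PA' * qsum q (\<alpha> ! (i0 - 1)))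
        / (PM' * qsum q (M i0 j0))"
    unfolding rhs_def iq exq_split[OF j0J] PA_split[OF qp] PM_split[OF qp j0J] X_def c_def PA'_def PM'_def
    by (simp add: power_add)
  show ?thesis unfolding L R using a0 m0 pm qs
    by (simp add: field_simps)
qed

lemma alg:
  assumes q: "q = 1 / real (card (UNIV::'a set))"
  shows "(\<Sum>j0\<in>J. rhs q \<alpha>' (\<beta>' j0) (M' j0) * real (card (UNIV::'a set)) ^ (Suc n - DD M k j0)) = rhs q \<alpha> \<beta> M"
proof -
  have qp: "q > 0" using q Q_pos by simp
  have a0: "qsum q (\<alpha> ! (i0 - 1)) > 0" using qp alpha_i0 by (intro qsum_pos)
  have "(\<Sum>j0\<in>J. rhs q \<alpha>' (\<beta>' j0) (M' j0) * real (card (UNIV::'a set)) ^ (Suc n - DD M k j0))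
      = (\<Sum>j0\<in>J. rhs q \<alpha> \<beta> M * (q ^ sj j0 * qsum q (M i0 j0)) / qsum q (\<alpha> ! (i0 - 1)))"
    using term_eq[OF q] by simp
  also have "\<dots> = rhs q \<alpha> \<beta> M / qsum q (\<alpha> ! (i0 - 1)) * (\<Sum>j0\<in>J. q ^ sj j0 * qsum q (M i0 j0))"
    by (simp add: sum_distrib_left sum_divide_distrib mult.assoc)
  also have "(\<Sum>j0\<in>J. q ^ sj j0 * qsum q (M i0 j0)) = (\<Sum>j0\<in>{1..l}. q ^ sj j0 * qsum q (M i0 j0))"
  proof (rule sum.mono_neutral_left)
    show "\<forall>j\<in>{1..l} - J. q ^ sj j * qsum q (M i0 j) = 0"
    proof
      fix j assume "j \<in> {1..l} - J"
      then have "M i0 j = 0" by (auto simp: J_def)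
      then show "q ^ sj j * qsum q (M i0 j) = 0" by simp
    qed
  qed (auto simp: J_def)
  also have "\<dots> = qsum q (\<Sum>j\<in>{1..l}. M i0 j)" unfolding sj_def by (rule qsum_telescope)
  also have "(\<Sum>j\<in>{1..l}. M i0 j) = \<alpha> ! (i0 - 1)" using rows i0_props by auto
  finally show ?thesis using a0 by simp
qed

end


lemma sum_take_le0: "sum_list (take j (xs :: nat list)) \<le> sum_list xs"
proof -
  have "sum_list xs = sum_list (take j xs) + sum_list (drop j xs)"
    by (metis append_take_drop_id sum_list_append)
  then show ?thesis by simp
qed

lemma base_case:
  fixes \<alpha> \<beta> :: "nat list" and M :: "nat \<Rightarrow> nat \<Rightarrow> nat"
  assumes alpha: "sum_list \<alpha> = 0" and beta: "sum_list \<beta> = 0"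
    and rows: "\<forall>i\<in>{1..length \<alpha>}. (\<Sum>j\<in>{1..length \<beta>}. M i j) = \<alpha> ! (i - 1)"
  shows "real (card {F' \<in> (Fl 0 \<beta> :: (nat \<Rightarrow> 'a::{field,finite}) set list set).
                       rel_pos (std_flag \<alpha>) F' M}) = rhs q \<alpha> \<beta> M"
proof -
  let ?k = "length \<alpha>" and ?l = "length \<beta>"
  have a0: "\<And>i. i < ?k \<Longrightarrow> \<alpha> ! i = 0" using alpha by (simp add: sum_list_eq_0_iff)
  have M0: "\<And>i j. i \<in> {1..?k} \<Longrightarrow> j \<in> {1..?l} \<Longrightarrow> M i j = 0"
  proof -
    fix i j assume i: "i \<in> {1..?k}" and j: "j \<in> {1..?l}"
    have "(\<Sum>j\<in>{1..?l}. M i j) = 0" using rows i a0[of "i - 1"] by auto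
    then show "M i j = 0" using j by simp
  qed
  have ex0: "exq ?k ?l M = 0" unfolding exq_def
    by (rule sum.neutral) (auto simp: M0)
  have pa: "(\<Prod>i\<in>{1..?k}. qfact q (\<alpha> ! (i - 1))) = 1"
    by (rule prod.neutral) (auto simp: a0 qfact_def)
  have pm: "(\<Prod>i\<in>{1..?k}. \<Prod>j\<in>{1..?l}. qfact q (M i j)) = 1"
    by (intro prod.neutral ballI) (auto simp: M0 qfact_def)
  have R: "rhs q \<alpha> \<beta> M = 1" unfolding rhs_def ex0 pa pm by simp
  define Z where "Z = (replicate (Suc ?l) {0} :: (nat \<Rightarrow> 'a) set list)"
  have tb: "\<And>j. sum_list (take j \<beta>) = 0" using sum_take_le0[of _ \<beta>] beta by simp
  have sub0: "fsubspace ({0} :: (nat \<Rightarrow> 'a) set)" by (simp add: vs.subspace_def fscale_def fun_eq_iff)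
  have amb0: "ambient 0 = ({0} :: (nat \<Rightarrow> 'a) set)" by (auto simp: ambient_def)
  have Zn: "\<And>j. j \<le> ?l \<Longrightarrow> Z ! j = {0}" unfolding Z_def by (simp del: replicate_Suc)
  have Zl: "length Z = Suc ?l" unfolding Z_def by (simp del: replicate_Suc)
  have tb': "\<And>j. sum_list (take j \<beta>) = 0" using tb by simp
  have ZF: "Z \<in> Fl 0 \<beta>" unfolding Fl_iff using sub0 amb0 Zn Zl by (simp add: tb')
  have DD0: "\<And>i j. i \<le> ?k \<Longrightarrow> j \<le> ?l \<Longrightarrow> DD M i j = 0"
    unfolding DD_def by (intro sum.neutral ballI) (auto simp: M0)
  have "rel_pos (std_flag \<alpha>) Z M" unfolding relpos_iff[OF ZF]
  proof (intro allI impI)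
    fix i j assume "i \<le> ?k" "j \<le> ?l"
    moreover have "ambient (sum_list (take i \<alpha>)) \<inter> Z ! j = {0}" using \<open>j \<le> ?l\<close> Zn by (auto simp: ambient_def)
    ultimately show "card (ambient (sum_list (take i \<alpha>)) \<inter> Z ! j) = card (UNIV::'a set) ^ DD M i j"
      using DD0 by simp
  qed
  moreover have "\<And>F. F \<in> Fl 0 \<beta> \<Longrightarrow> F = Z"
  proof -
    fix F :: "(nat \<Rightarrow> 'a) set list" assume F: "F \<in> Fl 0 \<beta>"
    show "F = Z"
    proof (rule nth_equalityI)
      show "length F = length Z" using F Zl by (simp add: Fl_iff)
      fix j assume "j < length F"
      then have j: "j \<le> ?l" using F by (simp add: Fl_iff)
      have "F ! j \<subseteq> {0}" "0 \<in> F ! j" using F j amb0 by (auto simp: Fl_iff vs.subspace_0)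
      then show "F ! j = Z ! j" using j Zn by auto
    qed
  qed
  ultimately have "{F' \<in> (Fl 0 \<beta> :: (nat \<Rightarrow> 'a) set list set). rel_pos (std_flag \<alpha>) F' M} = {Z}"
    using ZF by blast
  then show ?thesis using R by simp
qed

lemma main:
  "\<And>\<alpha> \<beta> M. sum_list \<alpha> = n \<Longrightarrow> sum_list \<beta> = n
   \<Longrightarrow> \<forall>i\<in>{1..length \<alpha>}. (\<Sum>j\<in>{1..length \<beta>}. M i j) = \<alpha> ! (i - 1)
   \<Longrightarrow> \<forall>j\<in>{1..length \<beta>}. (\<Sum>i\<in>{1..length \<alpha>}. M i j) = \<beta> ! (j - 1)
   \<Longrightarrow> real (card {F' \<in> (Fl n \<beta> :: (nat \<Rightarrow> 'a::{field,finite}) set list set).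
                       rel_pos (std_flag \<alpha>) F' M}) = rhs (1 / real (card (UNIV::'a set))) \<alpha> \<beta> M"
proof (induction n)
  case 0 then show ?case by (intro base_case) auto
next
  case (Suc n)
  interpret st: step n \<alpha> \<beta> M "TYPE('a)" by unfold_locales (use Suc.prems in auto)
  define q where "q = 1 / real (card (UNIV::'a set))"
  have "real (card {F' \<in> (Fl (Suc n) \<beta> :: (nat \<Rightarrow> 'a) set list set). rel_pos (std_flag \<alpha>) F' M})
      = real (card st.S)" by (simp add: st.S_def)
  also have "\<dots> = (\<Sum>j0\<in>st.J. real (card (st.S' j0)) * real (card (UNIV::'a set)) ^ (Suc n - DD M (length \<alpha>) j0))"
    unfolding st.recurrence by simp
  also have "\<dots> = (\<Sum>j0\<in>st.J. rhs q st.\<alpha>' (st.\<beta>' j0) (st.M' j0) * real (card (UNIV::'a set)) ^ (Suc n - DD M (length \<alpha>) j0))"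
  proof (rule sum.cong[OF refl])
    fix j0 assume j0: "j0 \<in> st.J"
    have "real (card (st.S' j0)) = rhs q st.\<alpha>' (st.\<beta>' j0) (st.M' j0)"
      unfolding st.S'_def q_def
      by (rule Suc.IH) (use st.alpha'_sum st.beta'_sum[OF j0] st.rows'[OF j0] st.cols'[OF j0] in auto)
    then show "real (card (st.S' j0)) * real (card (UNIV::'a set)) ^ (Suc n - DD M (length \<alpha>) j0)
        = rhs q st.\<alpha>' (st.\<beta>' j0) (st.M' j0) * real (card (UNIV::'a set)) ^ (Suc n - DD M (length \<alpha>) j0)" by simp
  qed
  also have "\<dots> = rhs q \<alpha> \<beta> M" by (rule st.alg) (simp add: q_def)
  finally show ?case unfolding q_def .
qed

theorem corollary4p29:
  fixes q :: real and n :: nat and \<alpha> \<beta> :: "nat list" and M :: "nat \<Rightarrow> nat \<Rightarrow> nat"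
  assumes field_card: "q = 1 / real (card (UNIV :: ('a::{field,finite}) set))"
    and alpha: "sum_list \<alpha> = n" and beta: "sum_list \<beta> = n"
    and rows: "\<forall>i\<in>{1..length \<alpha>}. (\<Sum>j\<in>{1..length \<beta>}. M i j) = \<alpha> ! (i - 1)"
    and cols: "\<forall>j\<in>{1..length \<beta>}. (\<Sum>i\<in>{1..length \<alpha>}. M i j) = \<beta> ! (j - 1)"
  shows "real (card {F' \<in> (Fl n \<beta> :: (nat \<Rightarrow> 'a) set list set).
                       rel_pos (std_flag \<alpha> :: (nat \<Rightarrow> 'a) set list) F' M})
       = inverse q ^ (\<Sum>(i, j, i', j') \<in> {(i, j, i', j').
              1 \<le> i' \<and> i' \<le> i \<and> i \<le> length \<alpha> \<and> 1 \<le> j \<and> j < j' \<and> j' \<le> length \<beta>}.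
                M i j * M i' j')
         * (\<Prod>i\<in>{1..length \<alpha>}. qfact q (\<alpha> ! (i - 1)))
         / (\<Prod>i\<in>{1..length \<alpha>}. \<Prod>j\<in>{1..length \<beta>}. qfact q (M i j))"
proof -
  have "real (card {F' \<in> (Fl n \<beta> :: (nat \<Rightarrow> 'a) set list set).
                       rel_pos (std_flag \<alpha> :: (nat \<Rightarrow> 'a) set list) F' M}) = rhs q \<alpha> \<beta> M"
    unfolding field_card by (rule main[OF alpha beta rows cols])
  then show ?thesis unfolding rhs_def exq_def .
qed

end
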